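(* Let $N$ be a finite set, $r\notin N$, $V=N\cup\{r\}$, and let $G=(V,E)$ be the complete graph on $V$ with edge weights $w:E\to\mathbb{R}$ taking the distinct values $w_1<\dots<w_k$. Assume that for every $i<k$ there is no violated cycle in $G_i$. Let $u,v\in N$ be distinct and $S\in\mathcal{S}_{uv}$. If $S\not\subseteq\hat N(uv)$, then $f_{uv}(S)=0$.
   Context: For $S\subseteq V$, $\mathrm{mst}(S)$ is the weight of a minimum spanning tree of $G[S]$. $\mathcal{S}_{uv}=\{S\subseteq V: r\in S,\ u,v\notin S\}$ and $f_{uv}(S)=\mathrm{mst}(S\cup\{u\})+\mathrm{mst}(S\cup\{v\})-\mathrm{mst}(S)-\mathrm{mst}(S\cup\{u,v\})$. $\hat N(uv)$ (expensive neighborhood of $uv$) is the set of vertices $s\in V\setminus\{u,v\}$ with $\max\{w(su),w(sv)\}>w(uv)$. $E_i=\{e\in E:w(e)\le w_i\}$, $G_i=(V,E_i)$. For a cycle $C$ in $G_i$ and a chord $f=xy$ of $C$ in $G_i$, with $P_1,P_2$ the two $x$-$y$ paths of $C$, $f$ covers $C$ if $w(f)\ge w(e)$ for all $e\in E(P_1)$ or for all $e\in E(P_2)$; $C$ is well-covered if covered by all its chords. A violated cycle in $G_i$ is a well-covered cycle of $G_i$ containing two vertices non-adjacent in $G_i$ and a vertex $x\ne r$ with $rx\notin E_i$. *)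

theory Defs
  imports Complex_Main
begin

definition all_edges :: "'a set \<Rightarrow> 'a set set" where
  "all_edges V = {{x, y} | x y. x \<in> V \<and> y \<in> V \<and> x \<noteq> y}"

definition spanning_tree :: "'a set \<Rightarrow> 'a set set \<Rightarrow> bool" where
  "spanning_tree S T \<longleftrightarrow> T \<subseteq> all_edges S \<and> card T = card S - 1 \<and>
     (\<forall>x\<in>S. \<forall>y\<in>S. (x, y) \<in> {(a, b). {a, b} \<in> T}\<^sup>*)"

definition mst :: "('a set \<Rightarrow> real) \<Rightarrow> 'a set \<Rightarrow> real" where
  "mst w S = Min {sum w T | T. spanning_tree S T}"

definition f_uv :: "('a set \<Rightarrow> real) \<Rightarrow> 'a \<Rightarrow> 'a \<Rightarrow> 'a set \<Rightarrow> real" where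
  "f_uv w u v S = mst w (insert u S) + mst w (insert v S) - mst w S - mst w (insert u (insert v S))"

definition S_fam :: "'a set \<Rightarrow> 'a \<Rightarrow> 'a \<Rightarrow> 'a \<Rightarrow> 'a set set" where
  "S_fam V r u v = {S. S \<subseteq> V \<and> r \<in> S \<and> u \<notin> S \<and> v \<notin> S}"

definition exp_nbhd :: "('a set \<Rightarrow> real) \<Rightarrow> 'a set \<Rightarrow> 'a \<Rightarrow> 'a \<Rightarrow> 'a set" where
  "exp_nbhd w V u v = {s \<in> V - {u, v}. max (w {s, u}) (w {s, v}) > w {u, v}}"

(* Cycles in a graph with vertex set V and edge set Es, represented by a list cs of
   distinct vertices v_0,...,v_{n-1} (n \<ge> 3), with edges {v_j, v_{(j+1) mod n}}. *)
definition cyc_edge :: "'a list \<Rightarrow> nat \<Rightarrow> 'a set" where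
  "cyc_edge cs j = {cs ! j, cs ! ((j + 1) mod length cs)}"

definition is_cycle :: "'a set \<Rightarrow> 'a set set \<Rightarrow> 'a list \<Rightarrow> bool" where
  "is_cycle V Es cs \<longleftrightarrow> distinct cs \<and> length cs \<ge> 3 \<and> set cs \<subseteq> V \<and>
     (\<forall>j < length cs. cyc_edge cs j \<in> Es)"

definition is_chord :: "'a set set \<Rightarrow> 'a list \<Rightarrow> nat \<Rightarrow> nat \<Rightarrow> bool" where
  "is_chord Es cs a b \<longleftrightarrow> a < b \<and> b < length cs \<and> {cs ! a, cs ! b} \<in> Es \<and>
     {cs ! a, cs ! b} \<notin> {cyc_edge cs j | j. j < length cs}"

(* the two cs!a - cs!b paths of the cycle use the cycle edges with indices in
   {a..<b} and in {0..<length cs} - {a..<b}, respectively *)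
definition covers :: "('a set \<Rightarrow> real) \<Rightarrow> 'a list \<Rightarrow> nat \<Rightarrow> nat \<Rightarrow> bool" where
  "covers w cs a b \<longleftrightarrow>
     (\<forall>j \<in> {a..<b}. w (cyc_edge cs j) \<le> w {cs ! a, cs ! b}) \<or>
     (\<forall>j \<in> {0..<length cs} - {a..<b}. w (cyc_edge cs j) \<le> w {cs ! a, cs ! b})"

definition well_covered :: "('a set \<Rightarrow> real) \<Rightarrow> 'a set set \<Rightarrow> 'a list \<Rightarrow> bool" where
  "well_covered w Es cs \<longleftrightarrow> (\<forall>a b. is_chord Es cs a b \<longrightarrow> covers w cs a b)"

definition violated_cycle :: "('a set \<Rightarrow> real) \<Rightarrow> 'a set \<Rightarrow> 'a set set \<Rightarrow> 'a \<Rightarrow> 'a list \<Rightarrow> bool" where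
  "violated_cycle w V Es r cs \<longleftrightarrow> is_cycle V Es cs \<and> well_covered w Es cs \<and>
     (\<exists>x\<in>set cs. \<exists>y\<in>set cs. x \<noteq> y \<and> {x, y} \<notin> Es) \<and>
     (\<exists>x\<in>set cs. x \<noteq> r \<and> {r, x} \<notin> Es)"

(* E_i for threshold value c = w_i *)
definition thr_edges :: "('a set \<Rightarrow> real) \<Rightarrow> 'a set \<Rightarrow> real \<Rightarrow> 'a set set" where
  "thr_edges w V c = {e \<in> all_edges V. w e \<le> c}"

end

theory Submission
  imports Defs
begin
definition grel :: "'a set \<Rightarrow> 'a set set \<Rightarrow> ('a \<times> 'a) set" where
  "grel X F = {(a,b). a \<in> X \<and> b \<in> X \<and> {a,b} \<in> F}"
definition gcls :: "'a set \<Rightarrow> 'a set set \<Rightarrow> 'a \<Rightarrow> 'a set" where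
  "gcls X F x = (grel X F)\<^sup>* `` {x}"
definition gparts :: "'a set \<Rightarrow> 'a set set \<Rightarrow> 'a set set" where
  "gparts X F = gcls X F ` X"
definition gcc :: "'a set \<Rightarrow> 'a set set \<Rightarrow> nat" where
  "gcc X F = card (gparts X F)"

lemma grel_sym: "(a,b) \<in> grel X F \<Longrightarrow> (b,a) \<in> grel X F"
  by (auto simp: grel_def insert_commute)

lemma grel_rtr_sym: "(a,b) \<in> (grel X F)\<^sup>* \<Longrightarrow> (b,a) \<in> (grel X F)\<^sup>*"
proof (induction rule: rtrancl_induct)
  case base then show ?case by simp
next
  case (step y z)
  then show ?case using grel_sym
    by (meson converse_rtrancl_into_rtrancl)
qed

lemma gcls_self: "x \<in> gcls X F x" by (simp add: gcls_def)

lemma gcls_sub: "x \<in> X \<Longrightarrow> gcls X F x \<subseteq> X"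
proof
  fix y assume "x \<in> X" "y \<in> gcls X F x"
  then have "(x,y) \<in> (grel X F)\<^sup>*" by (simp add: gcls_def)
  then show "y \<in> X" using \<open>x \<in> X\<close>
    by (induction rule: rtrancl_induct) (auto simp: grel_def)
qed

lemma gcls_eq: "y \<in> gcls X F x \<Longrightarrow> gcls X F y = gcls X F x"
proof -
  assume "y \<in> gcls X F x"
  then have xy: "(x,y) \<in> (grel X F)\<^sup>*" by (simp add: gcls_def)
  then have yx: "(y,x) \<in> (grel X F)\<^sup>*" by (rule grel_rtr_sym)
  show ?thesis unfolding gcls_def using xy yx
    by (auto intro: rtrancl_trans)
qed

lemma gcls_mem_sym: "y \<in> gcls X F x \<Longrightarrow> x \<in> gcls X F y"
  using gcls_eq gcls_self by metis

lemma gcls_edge: "a \<in> X \<Longrightarrow> b \<in> X \<Longrightarrow> {a,b} \<in> F \<Longrightarrow> b \<in> gcls X F a"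
  by (auto simp: gcls_def grel_def)


lemma closed_rtrancl:
  assumes "x \<in> Z" "\<And>y z. y \<in> Z \<Longrightarrow> (y,z) \<in> R \<Longrightarrow> z \<in> Z"
  shows "R\<^sup>* `` {x} \<subseteq> Z"
proof
  fix y assume "y \<in> R\<^sup>* `` {x}"
  then have "(x,y) \<in> R\<^sup>*" by simp
  then show "y \<in> Z" by (induction rule: rtrancl_induct) (use assms in auto)
qed

lemma gcls_closed:
  assumes "x \<in> Z" "\<And>y z. y \<in> Z \<Longrightarrow> (y,z) \<in> grel X F \<Longrightarrow> z \<in> Z"
  shows "gcls X F x \<subseteq> Z"
  unfolding gcls_def using closed_rtrancl[of x Z "grel X F"] assms by blast

lemma gcls_mono: "X \<subseteq> Y \<Longrightarrow> F \<subseteq> G \<Longrightarrow> gcls X F x \<subseteq> gcls Y G x"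
proof -
  assume "X \<subseteq> Y" "F \<subseteq> G"
  then have "grel X F \<subseteq> grel Y G" by (auto simp: grel_def)
  then show ?thesis unfolding gcls_def using rtrancl_mono by blast
qed

lemma finite_gparts: "finite X \<Longrightarrow> finite (gparts X F)"
  by (simp add: gparts_def)

lemma gparts_sub: "C \<in> gparts X F \<Longrightarrow> C \<subseteq> X"
proof -
  assume "C \<in> gparts X F"
  then obtain x where "x \<in> X" "C = gcls X F x" by (auto simp: gparts_def)
  then show ?thesis using gcls_sub[of x X F] by simp
qed

lemma gparts_cls: "C \<in> gparts X F \<Longrightarrow> y \<in> C \<Longrightarrow> gcls X F y = C"
proof -
  assume "C \<in> gparts X F" "y \<in> C"
  then obtain x where "x \<in> X" "C = gcls X F x" by (auto simp: gparts_def)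
  then show ?thesis using gcls_eq[of y X F x] \<open>y \<in> C\<close> by simp
qed

lemma edge_add_cls:
  fixes F :: "'a set set"
  assumes a: "a \<in> X" and b: "b \<in> X" and x: "x \<in> X"
  defines "U \<equiv> gcls X F a \<union> gcls X F b"
  shows "gcls X (insert {a,b} F) x = (if x \<in> U then U else gcls X F x)"
proof -
  let ?F = "insert {a,b} F"
  have sub: "\<And>y. gcls X F y \<subseteq> gcls X ?F y" by (rule gcls_mono) auto
  have ab: "b \<in> gcls X ?F a" using a b by (intro gcls_edge) auto
  show ?thesis
  proof (cases "x \<in> U")
    case True
    have "U \<subseteq> gcls X ?F a"
      using sub[of a] sub[of b] gcls_eq[OF ab] unfolding U_def by auto
    moreover have "x \<in> gcls X ?F a" using \<open>U \<subseteq> gcls X ?F a\<close> True by auto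
    ultimately have "U \<subseteq> gcls X ?F x" using gcls_eq by metis
    moreover have "gcls X ?F x \<subseteq> U"
    proof (rule gcls_closed)
      show "x \<in> U" by fact
    next
      fix y z assume "y \<in> U" "(y,z) \<in> grel X ?F"
      then have yz: "y \<in> X" "z \<in> X" "{y,z} = {a,b} \<or> {y,z} \<in> F" by (auto simp: grel_def)
      show "z \<in> U"
      proof (cases "{y,z} = {a,b}")
        case True then have "z \<in> {a,b}" by blast
        then show ?thesis using gcls_self unfolding U_def by fast
      next
        case False
        then have "{y,z} \<in> F" using yz by blast
        then have "z \<in> gcls X F y" using yz(1,2) by (rule gcls_edge[rotated 2])
        then show ?thesis using \<open>y \<in> U\<close> gcls_eq[of y X F a] gcls_eq[of y X F b] unfolding U_def by blast
      qed
    qed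
    ultimately show ?thesis using True by auto
  next
    case False
    have "gcls X ?F x \<subseteq> gcls X F x"
    proof (rule gcls_closed)
      show "x \<in> gcls X F x" by (rule gcls_self)
    next
      fix y z assume y: "y \<in> gcls X F x" and "(y,z) \<in> grel X ?F"
      then have yz: "y \<in> X" "z \<in> X" "{y,z} = {a,b} \<or> {y,z} \<in> F" by (auto simp: grel_def)
      show "z \<in> gcls X F x"
      proof (cases "{y,z} = {a,b}")
        case True then have "y \<in> {a,b}" by blast
        then have "y \<in> U" using gcls_self unfolding U_def by fast
        then have "x \<in> U" using gcls_eq[of y X F a] gcls_eq[of y X F b] gcls_eq[OF y] gcls_self[of x X F] unfolding U_def by auto
        then show ?thesis using False by simp
      next
        case False
        then have "{y,z} \<in> F" using yz by blast
        then have "z \<in> gcls X F y" using yz(1,2) by (rule gcls_edge[rotated 2])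
        then show ?thesis using gcls_eq[OF y] by simp
      qed
    qed
    then show ?thesis using False sub[of x] by auto
  qed
qed

lemma edge_add_parts:
  assumes a: "a \<in> X" and b: "b \<in> X"
  shows "gparts X (insert {a,b} F) = (gparts X F - {gcls X F a, gcls X F b}) \<union> {gcls X F a \<union> gcls X F b}"
    (is "?L = ?R")
proof
  let ?U = "gcls X F a \<union> gcls X F b"
  show "?L \<subseteq> ?R"
  proof
    fix C assume "C \<in> ?L"
    then obtain x where x: "x \<in> X" "C = gcls X (insert {a,b} F) x" by (auto simp: gparts_def)
    show "C \<in> ?R"
    proof (cases "x \<in> ?U")
      case True then show ?thesis using x edge_add_cls[OF a b x(1)] by simp
    next
      case False
      then have "gcls X F x \<noteq> gcls X F a" "gcls X F x \<noteq> gcls X F b" using gcls_self[of x X F] by auto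
      then show ?thesis using x edge_add_cls[OF a b x(1)] False by (auto simp: gparts_def)
    qed
  qed
next
  let ?U = "gcls X F a \<union> gcls X F b"
  show "?R \<subseteq> ?L"
  proof
    fix C assume "C \<in> ?R"
    then consider "C = ?U" | x where "x \<in> X" "C = gcls X F x" "C \<noteq> gcls X F a" "C \<noteq> gcls X F b"
      by (auto simp: gparts_def)
    then show "C \<in> ?L"
    proof cases
      case 1
      have "gcls X (insert {a,b} F) a = ?U" using edge_add_cls[OF a b a] gcls_self[of a X F] by simp
      then show ?thesis using 1 a unfolding gparts_def by blast
    next
      case 2
      then have "x \<notin> ?U" using gcls_eq[of x X F a] gcls_eq[of x X F b] by auto
      have "gcls X (insert {a,b} F) x = C" using edge_add_cls[OF a b \<open>x\<in>X\<close>] \<open>x \<notin> ?U\<close> 2 by simp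
      then show ?thesis using \<open>x\<in>X\<close> unfolding gparts_def by blast
    qed
  qed
qed

lemma edge_add_card:
  assumes fin: "finite X" and a: "a \<in> X" and b: "b \<in> X"
  shows "gcc X (insert {a,b} F) + card {gcls X F a, gcls X F b} = gcc X F + 1"
proof -
  let ?U = "gcls X F a \<union> gcls X F b"
  let ?P = "gparts X F"
  have sub: "{gcls X F a, gcls X F b} \<subseteq> ?P" using a b by (auto simp: gparts_def)
  have notin: "?U \<notin> ?P - {gcls X F a, gcls X F b}"
  proof
    assume "?U \<in> ?P - {gcls X F a, gcls X F b}"
    then have "?U \<in> ?P" "?U \<noteq> gcls X F a" by auto
    moreover have "gcls X F a = ?U" using gparts_cls[OF \<open>?U \<in> ?P\<close>, of a] gcls_self[of a X F] by blast
    ultimately show False by simp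
  qed
  have fP: "finite ?P" using fin by (rule finite_gparts)
  have "gcc X (insert {a,b} F) = card (?P - {gcls X F a, gcls X F b}) + 1"
    unfolding gcc_def edge_add_parts[OF a b] using notin fP by simp
  moreover have "card (?P - {gcls X F a, gcls X F b}) + card {gcls X F a, gcls X F b} = card ?P"
  proof -
    have "card {gcls X F a, gcls X F b} \<le> card ?P" using card_mono[OF fP sub] .
    moreover have "card (?P - {gcls X F a, gcls X F b}) = card ?P - card {gcls X F a, gcls X F b}"
      using card_Diff_subset[OF _ sub] by simp
    ultimately show ?thesis by simp
  qed
  ultimately show ?thesis unfolding gcc_def by simp
qed

definition touch :: "'a set \<Rightarrow> 'a set set \<Rightarrow> 'a \<Rightarrow> 'a set set" where
  "touch X F u = {C \<in> gparts X F. \<exists>y\<in>C. {u,y} \<in> F}"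

lemma vadd_cls:
  fixes F :: "'a set set"
  assumes u: "u \<notin> X" and x: "x \<in> insert u X"
  shows "gcls (insert u X) F x =
    (if x \<in> insert u (\<Union>(touch X F u)) then insert u (\<Union>(touch X F u)) else gcls X F x)"
proof -
  let ?X = "insert u X"
  let ?K = "touch X F u"
  let ?M = "insert u (\<Union>?K)"
  have sub: "\<And>y. gcls X F y \<subseteq> gcls ?X F y" by (rule gcls_mono) auto
  have M1: "?M \<subseteq> gcls ?X F u"
  proof
    fix y assume "y \<in> ?M"
    show "y \<in> gcls ?X F u"
    proof (cases "y = u")
      case True then show ?thesis using gcls_self by metis
    next
      case False
      then obtain C where C: "C \<in> ?K" "y \<in> C" using \<open>y \<in> ?M\<close> by auto
      then obtain y0 where y0: "y0 \<in> C" "{u,y0} \<in> F" "C \<in> gparts X F" by (auto simp: touch_def)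
      have "y0 \<in> X" using gparts_sub[OF y0(3)] y0(1) by blast
      have e: "y0 \<in> gcls ?X F u" using \<open>y0 \<in> X\<close> y0(2) by (intro gcls_edge) auto
      have "gcls X F y0 = C" using gparts_cls[OF y0(3) y0(1)] .
      then have "y \<in> gcls ?X F y0" using sub[of y0] C(2) by blast
      then show ?thesis using gcls_eq[OF e] by simp
    qed
  qed
  have M2: "gcls ?X F u \<subseteq> ?M"
  proof (rule gcls_closed)
    show "u \<in> ?M" by simp
  next
    fix y z assume y: "y \<in> ?M" and yz: "(y,z) \<in> grel ?X F"
    then have yz': "y \<in> ?X" "z \<in> ?X" "{y,z} \<in> F" by (auto simp: grel_def)
    show "z \<in> ?M"
    proof (cases "z = u")
      case True then show ?thesis by simp
    next
      case False
      then have zX: "z \<in> X" using yz' by simp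
      show ?thesis
      proof (cases "y = u")
        case True
        have "gcls X F z \<in> ?K" using zX yz'(3) True gcls_self[of z X F]
          unfolding touch_def gparts_def by blast
        then show ?thesis using gcls_self[of z X F] by blast
      next
        case False
        then obtain C where C: "C \<in> ?K" "y \<in> C" using y by auto
        have CP: "C \<in> gparts X F" using C(1) by (simp add: touch_def)
        have yX: "y \<in> X" using gparts_sub[OF CP] C(2) by blast
        have "z \<in> gcls X F y" using yX zX yz'(3) by (rule gcls_edge)
        then have "z \<in> C" using gparts_cls[OF CP C(2)] by simp
        then show ?thesis using C(1) by blast
      qed
    qed
  qed
  have Mu: "gcls ?X F u = ?M" using M1 M2 by blast
  show ?thesis
  proof (cases "x \<in> ?M")
    case True
    then have "x \<in> gcls ?X F u" using Mu by simp
    then show ?thesis using gcls_eq[of x ?X F u] Mu True by simp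
  next
    case False
    then have xX: "x \<in> X" "x \<noteq> u" using x by auto
    have "gcls ?X F x \<subseteq> gcls X F x"
    proof (rule gcls_closed)
      show "x \<in> gcls X F x" by (rule gcls_self)
    next
      fix y z assume y: "y \<in> gcls X F x" and yz: "(y,z) \<in> grel ?X F"
      then have yz': "y \<in> ?X" "z \<in> ?X" "{y,z} \<in> F" by (auto simp: grel_def)
      have yX: "y \<in> X" using gcls_sub[OF xX(1)] y by blast
      have cy: "gcls X F y = gcls X F x" using gcls_eq[OF y] .
      show "z \<in> gcls X F x"
      proof (cases "z = u")
        case True
        then have "{u,y} \<in> F" using yz'(3) by (simp add: insert_commute)
        then have "gcls X F y \<in> ?K" using yX gcls_self[of y X F]
          unfolding touch_def gparts_def by blast
        then have "x \<in> ?M" using cy gcls_self[of x X F] by auto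
        then show ?thesis using False by simp
      next
        case False
        then have "z \<in> X" using yz' by simp
        then have "z \<in> gcls X F y" using yX yz'(3) by (intro gcls_edge)
        then show ?thesis using cy by simp
      qed
    qed
    then have "gcls ?X F x = gcls X F x" using sub[of x] by blast
    then show ?thesis using False by simp
  qed
qed

lemma vadd_parts:
  fixes F :: "'a set set"
  assumes u: "u \<notin> X"
  shows "gparts (insert u X) F = (gparts X F - touch X F u) \<union> {insert u (\<Union>(touch X F u))}"
    (is "?L = ?R")
proof
  let ?K = "touch X F u"
  let ?M = "insert u (\<Union>?K)"
  show "?L \<subseteq> ?R"
  proof
    fix C assume "C \<in> ?L"
    then obtain x where x: "x \<in> insert u X" "C = gcls (insert u X) F x" by (auto simp: gparts_def)
    show "C \<in> ?R"
    proof (cases "x \<in> ?M")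
      case True then show ?thesis using vadd_cls[OF u x(1), of F] x(2) by simp
    next
      case False
      then have xX: "x \<in> X" using x by auto
      have "gcls X F x \<notin> ?K" using False gcls_self[of x X F] by blast
      moreover have "C = gcls X F x" using vadd_cls[OF u x(1), of F] x(2) False by simp
      ultimately show ?thesis using xX by (auto simp: gparts_def)
    qed
  qed
next
  let ?K = "touch X F u"
  let ?M = "insert u (\<Union>?K)"
  show "?R \<subseteq> ?L"
  proof
    fix C assume "C \<in> ?R"
    then consider "C = ?M" | x where "x \<in> X" "C = gcls X F x" "C \<notin> ?K"
      by (auto simp: gparts_def)
    then show "C \<in> ?L"
    proof cases
      case 1
      have "gcls (insert u X) F u = ?M" using vadd_cls[of u X u F] u by simp
      then show ?thesis using 1 unfolding gparts_def by blast
    next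
      case 2
      have "x \<notin> ?M"
      proof
        assume "x \<in> ?M"
        then obtain C' where "C' \<in> ?K" "x \<in> C'" using 2(1) u by auto
        then have "gcls X F x = C'" using gparts_cls[of C' X F x] by (simp add: touch_def)
        then show False using 2 \<open>C' \<in> ?K\<close> by simp
      qed
      then have "gcls (insert u X) F x = C" using vadd_cls[of u X x F] u 2 by simp
      then show ?thesis using 2(1) unfolding gparts_def by blast
    qed
  qed
qed

lemma M_notin_parts:
  assumes u: "u \<notin> X"
  shows "insert u A \<notin> gparts X F"
  using gparts_sub[of "insert u A" X F] u by blast

lemma vadd_card:
  fixes F :: "'a set set"
  assumes fin: "finite X" and u: "u \<notin> X"
  shows "gcc (insert u X) F + card (touch X F u) = gcc X F + 1"
proof -
  let ?K = "touch X F u"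
  let ?M = "insert u (\<Union>?K)"
  let ?P = "gparts X F"
  have fP: "finite ?P" using fin by (rule finite_gparts)
  have KP: "?K \<subseteq> ?P" by (auto simp: touch_def)
  have "?M \<notin> ?P - ?K" using M_notin_parts[OF u] by blast
  then have "gcc (insert u X) F = card (?P - ?K) + 1"
    unfolding gcc_def vadd_parts[OF u] using fP by simp
  moreover have "card ?K \<le> card ?P" using card_mono[OF fP KP] .
  moreover have "card (?P - ?K) = card ?P - card ?K"
    using card_Diff_subset[OF finite_subset[OF KP fP] KP] .
  ultimately show ?thesis unfolding gcc_def by simp
qed

lemma touch_vadd:
  fixes F :: "'a set set"
  assumes u: "u \<notin> X" and v: "v \<notin> insert u X"
  shows "touch (insert u X) F v = (touch X F v - touch X F u) \<union>
     (if \<exists>y\<in>insert u (\<Union>(touch X F u)). {v,y} \<in> F then {insert u (\<Union>(touch X F u))} else {})"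
  unfolding touch_def vadd_parts[OF u] by (auto simp: touch_def)

lemma card_touch_vadd:
  fixes F :: "'a set set"
  assumes fin: "finite X" and u: "u \<notin> X" and v: "v \<notin> insert u X"
  shows "card (touch (insert u X) F v) = card (touch X F v - touch X F u) +
     (if \<exists>y\<in>insert u (\<Union>(touch X F u)). {v,y} \<in> F then 1 else 0)"
proof -
  have fT: "finite (touch X F v - touch X F u)"
    using finite_gparts[OF fin, of F] by (auto simp: touch_def)
  have "insert u (\<Union>(touch X F u)) \<notin> touch X F v - touch X F u"
    using M_notin_parts[OF u] by (auto simp: touch_def)
  then show ?thesis unfolding touch_vadd[OF u v] using fT by auto
qed

lemma bracket:
  fixes F :: "'a set set"
  assumes fin: "finite S" and u: "u \<notin> S" and v: "v \<notin> S" and uv: "u \<noteq> v"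
    and hyp: "card (touch S F u \<inter> touch S F v) =
       (if {u,v} \<in> F \<or> touch S F u \<inter> touch S F v \<noteq> {} then 1 else 0)"
  shows "gcc (insert u S) F + gcc (insert v S) F = gcc S F + gcc (insert u (insert v S)) F"
proof -
  let ?Ku = "touch S F u" and ?Kv = "touch S F v"
  have fK: "finite ?Ku" using finite_gparts[OF fin, of F] by (auto simp: touch_def)
  have 1: "gcc (insert u S) F + card ?Ku = gcc S F + 1" using vadd_card[OF fin u] .
  have 2: "gcc (insert v S) F + card ?Kv = gcc S F + 1" using vadd_card[OF fin v] .
  have 3: "gcc (insert u (insert v S)) F + card (touch (insert v S) F u) = gcc (insert v S) F + 1"
    using vadd_card[of "insert v S" u F] fin u uv by simp
  have ex: "(\<exists>y\<in>insert v (\<Union>?Kv). {u,y} \<in> F) \<longleftrightarrow> ({u,v} \<in> F \<or> ?Ku \<inter> ?Kv \<noteq> {})"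
    by (auto simp: touch_def)
  have 4: "card (touch (insert v S) F u) = card (?Ku - ?Kv) +
      (if {u,v} \<in> F \<or> ?Ku \<inter> ?Kv \<noteq> {} then 1 else 0)"
    using card_touch_vadd[of S v u F] fin u v uv ex by simp
  have 5: "card ?Ku = card (?Ku - ?Kv) + card (?Ku \<inter> ?Kv)"
    using card_Diff_subset_Int[of ?Ku ?Kv] fK
    by (metis Int_Diff_disjoint Int_commute Un_Diff_Int card_Un_disjoint finite_Diff finite_Int)
  show ?thesis using 1 2 3 4 5 hyp by simp
qed

lemma all_edges_mem: "{a,b} \<in> all_edges X \<Longrightarrow> a \<in> X \<and> b \<in> X \<and> a \<noteq> b"
  unfolding all_edges_def by (auto simp: doubleton_eq_iff)

lemma all_edges_memI: "a \<in> X \<Longrightarrow> b \<in> X \<Longrightarrow> a \<noteq> b \<Longrightarrow> {a,b} \<in> all_edges X"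
  unfolding all_edges_def by blast

lemma all_edges_cases: "e \<in> all_edges X \<Longrightarrow> \<exists>a b. e = {a,b} \<and> a \<in> X \<and> b \<in> X \<and> a \<noteq> b"
  unfolding all_edges_def by blast

lemma all_edges_mono: "X \<subseteq> Y \<Longrightarrow> all_edges X \<subseteq> all_edges Y"
  unfolding all_edges_def by blast

lemma finite_all_edges: "finite X \<Longrightarrow> finite (all_edges X)"
proof -
  assume "finite X"
  have "all_edges X \<subseteq> (\<lambda>(x,y). {x,y}) ` (X \<times> X)" unfolding all_edges_def by auto
  then show ?thesis using \<open>finite X\<close> finite_subset by blast
qed

lemma gcls_empty: "gcls X {} x = {x}"
  unfolding gcls_def grel_def by simp

lemma gcc_empty: "finite X \<Longrightarrow> gcc X {} = card X"
proof -
  have "gparts X {} = (\<lambda>x. {x}) ` X" unfolding gparts_def gcls_empty by simp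
  moreover have "inj_on (\<lambda>x. {x}) X" by (auto simp: inj_on_def)
  ultimately show ?thesis unfolding gcc_def by (simp add: card_image)
qed

lemma gcc_one: "X \<noteq> {} \<Longrightarrow> (\<And>x. x \<in> X \<Longrightarrow> gcls X F x = X) \<Longrightarrow> gcc X F = 1"
proof -
  assume "X \<noteq> {}" "\<And>x. x \<in> X \<Longrightarrow> gcls X F x = X"
  then have "gparts X F = {X}" unfolding gparts_def by auto
  then show ?thesis unfolding gcc_def by simp
qed

lemma conn_all: "all_edges X \<subseteq> F \<Longrightarrow> x \<in> X \<Longrightarrow> gcls X F x = X"
proof
  assume F: "all_edges X \<subseteq> F" and x: "x \<in> X"
  show "gcls X F x \<subseteq> X" using gcls_sub[OF x] .
  show "X \<subseteq> gcls X F x"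
  proof
    fix y assume y: "y \<in> X"
    show "y \<in> gcls X F x"
    proof (cases "y = x")
      case True then show ?thesis using gcls_self by metis
    next
      case False
      then have "{x,y} \<in> F" using F all_edges_memI[OF x y] by blast
      then show ?thesis using x y by (rule gcls_edge[rotated 2])
    qed
  qed
qed

lemma add_edges_bound:
  assumes fin: "finite X" and fA: "finite A"
  shows "A \<subseteq> all_edges X \<Longrightarrow> gcc X F \<le> gcc X (F \<union> A) + card A"
  using fA
proof (induction A rule: finite_induct)
  case empty then show ?case by simp
next
  case (insert e A)
  then obtain a b where ab: "e = {a,b}" "a \<in> X" "b \<in> X" using all_edges_cases by blast
  have "gcc X (insert {a,b} (F \<union> A)) + card {gcls X (F \<union> A) a, gcls X (F \<union> A) b} = gcc X (F \<union> A) + 1"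
    using edge_add_card[OF fin ab(2,3)] .
  moreover have "card {gcls X (F \<union> A) a, gcls X (F \<union> A) b} \<le> 2" by (simp add: card_insert_le_m1)
  moreover have "F \<union> insert e A = insert {a,b} (F \<union> A)" using ab by simp
  ultimately show ?case using insert by simp
qed

lemma tree_lower:
  assumes fin: "finite X" and ne: "X \<noteq> {}" and XV: "X \<subseteq> V" and T: "spanning_tree X T"
  shows "gcc X (thr_edges w V t) \<le> card {e \<in> T. t < w e} + 1"
proof -
  let ?F = "thr_edges w V t"
  let ?A = "{e \<in> T. t < w e}"
  have TX: "T \<subseteq> all_edges X" using T by (simp add: spanning_tree_def)
  have fT: "finite T" using finite_subset[OF TX finite_all_edges[OF fin]] .
  have AX: "?A \<subseteq> all_edges X" using TX by blast
  have TFA: "T \<subseteq> ?F \<union> ?A"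
    using TX all_edges_mono[OF XV] by (auto simp: thr_edges_def)
  have "gcc X (?F \<union> ?A) = 1"
  proof (rule gcc_one[OF ne])
    fix x assume x: "x \<in> X"
    show "gcls X (?F \<union> ?A) x = X"
    proof
      show "gcls X (?F \<union> ?A) x \<subseteq> X" using gcls_sub[OF x] .
      show "X \<subseteq> gcls X (?F \<union> ?A) x"
      proof
        fix y assume y: "y \<in> X"
        have "(x,y) \<in> {(a,b). {a,b} \<in> T}\<^sup>*" using T x y by (simp add: spanning_tree_def)
        moreover have "{(a,b). {a,b} \<in> T} \<subseteq> grel X (?F \<union> ?A)"
        proof
          fix p assume "p \<in> {(a,b). {a,b} \<in> T}"
          then obtain a b where p: "p = (a,b)" "{a,b} \<in> T" by auto
          then have "{a,b} \<in> all_edges X" using TX by blast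
          then have "a \<in> X" "b \<in> X" using all_edges_mem[of a b X] by auto
          moreover have "{a,b} \<in> ?F \<union> ?A" using TFA p(2) by blast
          ultimately show "p \<in> grel X (?F \<union> ?A)" using p(1) unfolding grel_def by simp
        qed
        ultimately have "(x,y) \<in> (grel X (?F \<union> ?A))\<^sup>*" using rtrancl_mono by blast
        then show "y \<in> gcls X (?F \<union> ?A) x" by (simp add: gcls_def)
      qed
    qed
  qed
  moreover have "gcc X ?F \<le> gcc X (?F \<union> ?A) + card ?A"
    using add_edges_bound[OF fin _ AX] fT by simp
  ultimately show ?thesis by simp
qed

lemma extend_forest:
  assumes fin: "finite X" and HX: "H \<subseteq> all_edges X"
  shows "F \<subseteq> H \<Longrightarrow> card F + gcc X F = card X \<Longrightarrow>
    \<exists>F'. F \<subseteq> F' \<and> F' \<subseteq> H \<and> card F' + gcc X F' = card X \<and> gparts X F' = gparts X H"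
proof (induction "gcc X F" arbitrary: F rule: less_induct)
  case less
  show ?case
  proof (cases "gparts X F = gparts X H")
    case True
    have "F \<subseteq> F \<and> F \<subseteq> H \<and> card F + gcc X F = card X \<and> gparts X F = gparts X H"
      using less.prems(1) less.prems(2) True by (intro conjI subset_refl)
    then show ?thesis by blast
  next
    case False
    have "\<exists>a b. a \<in> X \<and> b \<in> X \<and> {a,b} \<in> H \<and> gcls X F a \<noteq> gcls X F b"
    proof (rule ccontr)
      assume nex: "\<not> ?thesis"
      have nex': "\<And>a b. a \<in> X \<Longrightarrow> b \<in> X \<Longrightarrow> {a,b} \<in> H \<Longrightarrow> gcls X F a = gcls X F b"
        using nex by blast
      have "\<And>x. x \<in> X \<Longrightarrow> gcls X H x = gcls X F x"
      proof
        fix x assume x: "x \<in> X"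
        show "gcls X F x \<subseteq> gcls X H x" using gcls_mono[of X X F H x] less.prems(1) by simp
        show "gcls X H x \<subseteq> gcls X F x"
        proof (rule gcls_closed)
          show "x \<in> gcls X F x" by (rule gcls_self)
        next
          fix y z assume y: "y \<in> gcls X F x" and yz: "(y,z) \<in> grel X H"
          then have yz': "y \<in> X" "z \<in> X" "{y,z} \<in> H" by (auto simp: grel_def)
          then have "gcls X F y = gcls X F z" by (rule nex')
          then have "z \<in> gcls X F y" using gcls_self[of z X F] by simp
          then show "z \<in> gcls X F x" using gcls_eq[OF y] by simp
        qed
      qed
      then have "gparts X F = gparts X H" unfolding gparts_def by simp
      then show False using False by simp
    qed
    then obtain a b where ab: "a \<in> X" "b \<in> X" "{a,b} \<in> H" "gcls X F a \<noteq> gcls X F b" by blast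
    have "F \<subseteq> all_edges X" using less.prems(1) HX by (rule subset_trans)
    then have fF: "finite F" using finite_all_edges[OF fin] by (rule finite_subset)
    have nF: "{a,b} \<notin> F"
    proof
      assume "{a,b} \<in> F"
      then have "b \<in> gcls X F a" using ab by (intro gcls_edge)
      then show False using gcls_eq[of b X F a] ab(4) by simp
    qed
    let ?F = "insert {a,b} F"
    have c1: "card ?F = card F + 1" using fF nF by simp
    have c2: "gcc X ?F + 2 = gcc X F + 1" using edge_add_card[OF fin ab(1,2), of F] ab(4) by simp
    have lt: "gcc X ?F < gcc X F" using c2 by simp
    have sH: "?F \<subseteq> H" using less.prems(1) ab(3) by simp
    have cc: "card ?F + gcc X ?F = card X" using c1 c2 less.prems(2) by simp
    obtain F' where F': "?F \<subseteq> F'" "F' \<subseteq> H" "card F' + gcc X F' = card X" "gparts X F' = gparts X H"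
      using less.hyps[OF lt sH cc] by blast
    have "F \<subseteq> F'" using F'(1) by blast
    then show ?thesis using F'(2-4) by blast
  qed
qed

lemma grel_thr:
  fixes X :: "'a set"
  assumes XV: "X \<subseteq> V"
  shows "grel X (thr_edges w V t) = grel X (thr_edges w X t)"
proof (rule set_eqI)
  fix p :: "'a \<times> 'a"
  obtain a b where p: "p = (a,b)" by fastforce
  have "a \<in> X \<Longrightarrow> b \<in> X \<Longrightarrow> {a,b} \<in> all_edges V \<longleftrightarrow> {a,b} \<in> all_edges X"
  proof
    assume "a \<in> X" "b \<in> X" "{a,b} \<in> all_edges V"
    then show "{a,b} \<in> all_edges X" using all_edges_mem[of a b V] all_edges_memI[of a X b] by simp
  next
    assume "{a,b} \<in> all_edges X"
    then show "{a,b} \<in> all_edges V" using all_edges_mono[OF XV] by blast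
  qed
  then show "p \<in> grel X (thr_edges w V t) \<longleftrightarrow> p \<in> grel X (thr_edges w X t)"
    unfolding grel_def thr_edges_def p by auto
qed

lemma gcc_thr: "X \<subseteq> V \<Longrightarrow> gcc X (thr_edges w V t) = gcc X (thr_edges w X t)"
  unfolding gcc_def gparts_def gcls_def using grel_thr by metis

lemma kruskal_aux:
  fixes w :: "'a set \<Rightarrow> real"
  assumes finV: "finite V" and XV: "X \<subseteq> V"
  shows "\<forall>t. t \<in> w ` all_edges V \<longrightarrow> card {t' \<in> w ` all_edges V. t' < t} = n \<longrightarrow>
    (\<exists>F. F \<subseteq> thr_edges w X t \<and> card F + gcc X F = card X \<and>
       gparts X F = gparts X (thr_edges w X t) \<and>
       (\<forall>t' \<in> w ` all_edges V. t' \<le> t \<longrightarrow> card X \<le> card {e \<in> F. w e \<le> t'} + gcc X (thr_edges w X t')))"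
proof (induction n rule: less_induct)
  case (less n)
  let ?W = "w ` all_edges V"
  have finW: "finite ?W" using finite_all_edges[OF finV] by simp
  have finX: "finite X" using finV XV finite_subset by blast
  show ?case
  proof (intro allI impI)
    fix t assume t: "t \<in> ?W" and n: "card {t' \<in> ?W. t' < t} = n"
    let ?H = "thr_edges w X t"
    have HX: "?H \<subseteq> all_edges X" by (auto simp: thr_edges_def)
    have eqt: "\<And>F. F \<subseteq> ?H \<Longrightarrow> {e \<in> F. w e \<le> t} = F" by (auto simp: thr_edges_def)
    show "\<exists>F. F \<subseteq> ?H \<and> card F + gcc X F = card X \<and> gparts X F = gparts X ?H \<and>
       (\<forall>t' \<in> ?W. t' \<le> t \<longrightarrow> card X \<le> card {e \<in> F. w e \<le> t'} + gcc X (thr_edges w X t'))"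
    proof (cases "{t' \<in> ?W. t' < t} = {}")
      case True
      have "{} \<subseteq> ?H" "card {} + gcc X {} = card X" using gcc_empty[OF finX] by auto
      then obtain F where F: "F \<subseteq> ?H" "card F + gcc X F = card X" "gparts X F = gparts X ?H"
        using extend_forest[OF finX HX, of "{}"] by blast
      have "\<forall>t' \<in> ?W. t' \<le> t \<longrightarrow> card X \<le> card {e \<in> F. w e \<le> t'} + gcc X (thr_edges w X t')"
      proof (intro ballI impI)
        fix t' assume t': "t' \<in> ?W" "t' \<le> t"
        then have "t' = t" using True by force
        moreover have "gcc X ?H = gcc X F" using F(3) by (simp add: gcc_def)
        ultimately show "card X \<le> card {e \<in> F. w e \<le> t'} + gcc X (thr_edges w X t')"
          using eqt[OF F(1)] F(2) by simp
      qed
      then show ?thesis using F by blast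
    next
      case False
      let ?B = "{t' \<in> ?W. t' < t}"
      let ?t0 = "Max ?B"
      have finB: "finite ?B" using finW by simp
      have t0B: "?t0 \<in> ?B" using Max_in[OF finB False] .
      have sub: "{t' \<in> ?W. t' < ?t0} \<subset> ?B" using t0B by auto
      have lt: "card {t' \<in> ?W. t' < ?t0} < n" using psubset_card_mono[OF finB sub] n by simp
      have t0W: "?t0 \<in> ?W" using t0B by simp
      obtain F0 where F0: "F0 \<subseteq> thr_edges w X ?t0" "card F0 + gcc X F0 = card X"
        "\<forall>t' \<in> ?W. t' \<le> ?t0 \<longrightarrow> card X \<le> card {e \<in> F0. w e \<le> t'} + gcc X (thr_edges w X t')"
        using less.IH[OF lt, rule_format, OF t0W refl] by blast
      have "thr_edges w X ?t0 \<subseteq> ?H" using t0B by (auto simp: thr_edges_def)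
      then have F0H: "F0 \<subseteq> ?H" using F0(1) by (rule subset_trans[rotated])
      obtain F where F: "F0 \<subseteq> F" "F \<subseteq> ?H" "card F + gcc X F = card X" "gparts X F = gparts X ?H"
        using extend_forest[OF finX HX F0H F0(2)] by blast
      have finF: "finite F" using finite_subset[OF subset_trans[OF F(2) HX] finite_all_edges[OF finX]] .
      have "\<forall>t' \<in> ?W. t' \<le> t \<longrightarrow> card X \<le> card {e \<in> F. w e \<le> t'} + gcc X (thr_edges w X t')"
      proof (intro ballI impI)
        fix t' assume t': "t' \<in> ?W" "t' \<le> t"
        show "card X \<le> card {e \<in> F. w e \<le> t'} + gcc X (thr_edges w X t')"
        proof (cases "t' = t")
          case True
          moreover have "gcc X ?H = gcc X F" using F(4) by (simp add: gcc_def)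
          ultimately show ?thesis using eqt[OF F(2)] F(3) by simp
        next
          case False
          then have "t' \<in> ?B" using t' by simp
          then have "t' \<le> ?t0" using Max_ge[OF finB] by blast
          then have "card X \<le> card {e \<in> F0. w e \<le> t'} + gcc X (thr_edges w X t')"
            using F0(3) t'(1) by blast
          moreover have "card {e \<in> F0. w e \<le> t'} \<le> card {e \<in> F. w e \<le> t'}"
            using F(1) finF by (intro card_mono) auto
          ultimately show ?thesis by simp
        qed
      qed
      then show ?thesis using F by blast
    qed
  qed
qed

lemma gparts_all: "X \<noteq> {} \<Longrightarrow> gparts X (all_edges X) = {X}"
  unfolding gparts_def using conn_all[of X "all_edges X"] by auto

lemma kruskal:
  fixes w :: "'a set \<Rightarrow> real"
  assumes finV: "finite V" and XV: "X \<subseteq> V" and ne: "X \<noteq> {}" and EV: "all_edges V \<noteq> {}"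
  shows "\<exists>T. spanning_tree X T \<and>
    (\<forall>t \<in> w ` all_edges V. card {e \<in> T. t < w e} + 1 \<le> gcc X (thr_edges w V t))"
proof -
  let ?W = "w ` all_edges V"
  let ?M = "Max ?W"
  have finW: "finite ?W" using finite_all_edges[OF finV] by simp
  have finX: "finite X" using finV XV finite_subset by blast
  have MW: "?M \<in> ?W" using Max_in[OF finW] EV by simp
  obtain F where F: "F \<subseteq> thr_edges w X ?M" "card F + gcc X F = card X"
       "gparts X F = gparts X (thr_edges w X ?M)"
       "\<forall>t' \<in> ?W. t' \<le> ?M \<longrightarrow> card X \<le> card {e \<in> F. w e \<le> t'} + gcc X (thr_edges w X t')"
    using kruskal_aux[OF finV XV, of w "card {t' \<in> ?W. t' < ?M}", rule_format, OF MW refl] by blast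
  have thrM: "thr_edges w X ?M = all_edges X"
  proof
    show "thr_edges w X ?M \<subseteq> all_edges X" by (auto simp: thr_edges_def)
    show "all_edges X \<subseteq> thr_edges w X ?M"
    proof
      fix e assume e: "e \<in> all_edges X"
      then have "e \<in> all_edges V" using all_edges_mono[OF XV] by blast
      then have "w e \<le> ?M" using Max_ge[OF finW] by simp
      then show "e \<in> thr_edges w X ?M" using e by (simp add: thr_edges_def)
    qed
  qed
  have pF: "gparts X F = {X}" using F(3) thrM gparts_all[OF ne] by simp
  then have ccF: "gcc X F = 1" by (simp add: gcc_def)
  have FX: "F \<subseteq> all_edges X" using F(1) thrM by simp
  have finF: "finite F" using finite_subset[OF FX finite_all_edges[OF finX]] .
  have cardF: "card F + 1 = card X" using F(2) ccF by simp
  have st: "spanning_tree X F"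
    unfolding spanning_tree_def
  proof (intro conjI ballI)
    show "F \<subseteq> all_edges X" by fact
    show "card F = card X - 1" using cardF by simp
    fix x y assume x: "x \<in> X" and y: "y \<in> X"
    have "gcls X F x \<in> gparts X F" using x by (simp add: gparts_def)
    then have "gcls X F x = X" using pF by simp
    then have "y \<in> gcls X F x" using y by simp
    then have "(x,y) \<in> (grel X F)\<^sup>*" by (simp add: gcls_def)
    moreover have "grel X F \<subseteq> {(a,b). {a,b} \<in> F}" by (auto simp: grel_def)
    ultimately show "(x, y) \<in> {(a, b). {a, b} \<in> F}\<^sup>*" using rtrancl_mono by blast
  qed
  have "\<forall>t \<in> ?W. card {e \<in> F. t < w e} + 1 \<le> gcc X (thr_edges w V t)"
  proof
    fix t assume t: "t \<in> ?W"
    have "t \<le> ?M" using Max_ge[OF finW t] .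
    then have a: "card X \<le> card {e \<in> F. w e \<le> t} + gcc X (thr_edges w X t)" using F(4) t by blast
    have b: "gcc X (thr_edges w V t) = gcc X (thr_edges w X t)" using gcc_thr[OF XV] .
    have s: "{e \<in> F. w e \<le> t} \<subseteq> F" by blast
    have d: "{e \<in> F. t < w e} = F - {e \<in> F. w e \<le> t}" by auto
    have c: "card {e \<in> F. t < w e} = card F - card {e \<in> F. w e \<le> t}"
      unfolding d using card_Diff_subset[OF finite_subset[OF s finF] s] .
    have "card {e \<in> F. w e \<le> t} \<le> card F" using card_mono[OF finF s] .
    then show "card {e \<in> F. t < w e} + 1 \<le> gcc X (thr_edges w V t)" using a b c cardF by simp
  qed
  then show ?thesis using st by blast
qed

definition gap :: "real set \<Rightarrow> real \<Rightarrow> real" where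
  "gap W t = (if {t' \<in> W. t < t'} = {} then 0 else Min {t' \<in> W. t < t'} - t)"

lemma gap_nonneg: "finite W \<Longrightarrow> gap W t \<ge> 0"
proof -
  assume fin: "finite W"
  show ?thesis
  proof (cases "{t' \<in> W. t < t'} = {}")
    case True then show ?thesis by (simp add: gap_def)
  next
    case False
    have "Min {t' \<in> W. t < t'} \<in> {t' \<in> W. t < t'}" using Min_in[OF _ False] fin by simp
    then show ?thesis using False by (simp add: gap_def)
  qed
qed

lemma tele_aux:
  assumes fin: "finite W"
  shows "\<forall>s. s \<in> W \<longrightarrow> card {t \<in> W. t < s} = n \<longrightarrow> s = Min W + (\<Sum>t \<in> {t \<in> W. t < s}. gap W t)"
proof (induction n rule: less_induct)
  case (less n)
  show ?case
  proof (intro allI impI)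
    fix s assume s: "s \<in> W" and n: "card {t \<in> W. t < s} = n"
    let ?B = "{t \<in> W. t < s}"
    have finB: "finite ?B" using fin by simp
    show "s = Min W + (\<Sum>t \<in> ?B. gap W t)"
    proof (cases "?B = {}")
      case True
      have "Min W = s"
      proof (rule Min_eqI[OF fin])
        fix y assume "y \<in> W" then show "s \<le> y" using True by force
      qed (rule s)
      then show ?thesis using True by (simp only:) simp
    next
      case False
      let ?p = "Max ?B"
      have pB: "?p \<in> ?B" using Max_in[OF finB False] .
      have Beq: "?B = insert ?p {t \<in> W. t < ?p}"
      proof
        show "?B \<subseteq> insert ?p {t \<in> W. t < ?p}"
        proof
          fix x assume x: "x \<in> ?B"
          then have "x \<le> ?p" using Max_ge[OF finB] by blast
          then show "x \<in> insert ?p {t \<in> W. t < ?p}" using x by auto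
        qed
        show "insert ?p {t \<in> W. t < ?p} \<subseteq> ?B" using pB by auto
      qed
      have sub: "{t \<in> W. t < ?p} \<subset> ?B" using pB by auto
      have lt: "card {t \<in> W. t < ?p} < n" using psubset_card_mono[OF finB sub] n by simp
      have IH: "?p = Min W + (\<Sum>t \<in> {t \<in> W. t < ?p}. gap W t)"
        using less.IH[OF lt, rule_format, of ?p] pB by blast
      have gp: "gap W ?p = s - ?p"
      proof -
        have ne: "{t' \<in> W. ?p < t'} \<noteq> {}" using s pB by auto
        have mn: "Min {t' \<in> W. ?p < t'} = s"
        proof (rule Min_eqI)
          show "finite {t' \<in> W. ?p < t'}" using fin by simp
          show "s \<in> {t' \<in> W. ?p < t'}" using s pB by simp
          fix y assume y: "y \<in> {t' \<in> W. ?p < t'}"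
          show "s \<le> y"
          proof (rule ccontr)
            assume "\<not> s \<le> y"
            then have "y \<in> ?B" using y by auto
            then have "y \<le> ?p" using Max_ge[OF finB] by blast
            then show False using y by simp
          qed
        qed
        show ?thesis unfolding gap_def by (subst if_not_P[OF ne]) (simp only: mn)
      qed
      have "(\<Sum>t \<in> ?B. gap W t) = gap W ?p + (\<Sum>t \<in> {t \<in> W. t < ?p}. gap W t)"
        by (subst Beq) (simp add: fin)
      then show ?thesis using IH gp by simp
    qed
  qed
qed

lemma tele: "finite W \<Longrightarrow> s \<in> W \<Longrightarrow> s = Min W + (\<Sum>t \<in> {t \<in> W. t < s}. gap W t)"
  using tele_aux by blast

lemma sum_tele:
  fixes w :: "'b \<Rightarrow> real"
  assumes finW: "finite W" and finT: "finite T" and TW: "\<And>e. e \<in> T \<Longrightarrow> w e \<in> W"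
  shows "sum w T = Min W * card T + (\<Sum>t \<in> W. gap W t * card {e \<in> T. t < w e})"
proof -
  have "sum w T = (\<Sum>e \<in> T. Min W + (\<Sum>t \<in> {t \<in> W. t < w e}. gap W t))"
    using tele[OF finW TW] by (intro sum.cong) auto
  also have "\<dots> = Min W * card T + (\<Sum>e \<in> T. \<Sum>t \<in> W. if t < w e then gap W t else 0)"
    by (simp add: sum.distrib sum.inter_filter[OF finW])
  also have "(\<Sum>e \<in> T. \<Sum>t \<in> W. if t < w e then gap W t else 0) = (\<Sum>t \<in> W. \<Sum>e \<in> T. if t < w e then gap W t else 0)"
    by (rule sum.swap)
  also have "\<dots> = (\<Sum>t \<in> W. gap W t * card {e \<in> T. t < w e})"
    by (intro sum.cong refl) (simp add: sum.inter_filter[OF finT, symmetric])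
  finally show ?thesis .
qed

fun pairs :: "'a list \<Rightarrow> 'a set set" where
  "pairs (a # b # xs) = insert {a,b} (pairs (b # xs))"
| "pairs _ = {}"

lemma pairs_Cons: "p \<noteq> [] \<Longrightarrow> pairs (x # p) = insert {x, hd p} (pairs p)"
  by (cases p) auto

lemma pairs_snoc: "p \<noteq> [] \<Longrightarrow> pairs (p @ [y]) = insert {last p, y} (pairs p)"
proof (induction p rule: pairs.induct)
  case (1 a b xs) then show ?case by auto
next
  case ("2_1") then show ?case by simp
next
  case ("2_2" v) then show ?case by simp
qed

lemma pairs_append: "pairs (xs @ y # ys) = pairs (xs @ [y]) \<union> pairs (y # ys)"
proof (induction xs)
  case Nil then show ?case by simp
next
  case (Cons a xs)
  then show ?case by (cases xs) auto
qed

lemma pairs_rev: "pairs (rev xs) = pairs xs"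
proof (induction xs)
  case Nil then show ?case by simp
next
  case (Cons a xs)
  show ?case
  proof (cases "xs = []")
    case True then show ?thesis by simp
  next
    case False
    have "pairs (rev (a # xs)) = insert {last (rev xs), a} (pairs (rev xs))"
      using pairs_snoc[of "rev xs" a] False by simp
    also have "\<dots> = insert {hd xs, a} (pairs xs)" using Cons False by (simp add: last_rev)
    also have "\<dots> = pairs (a # xs)" using pairs_Cons[OF False, of a] by (simp add: insert_commute)
    finally show ?thesis .
  qed
qed

lemma pairs_mem: "e \<in> pairs xs \<Longrightarrow> \<exists>x y. e = {x,y} \<and> x \<in> set xs \<and> y \<in> set xs"
  by (induction xs rule: pairs.induct) auto

lemma pairs_nth: "pairs xs = {{xs ! i, xs ! Suc i} | i. Suc i < length xs}"
proof (induction xs rule: pairs.induct)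
  case (1 a b xs)
  have "{{(a # b # xs) ! i, (a # b # xs) ! Suc i} | i. Suc i < length (a # b # xs)}
      = insert {a,b} {{(b # xs) ! i, (b # xs) ! Suc i} | i. Suc i < length (b # xs)}"
  proof
    show "{{(a # b # xs) ! i, (a # b # xs) ! Suc i} | i. Suc i < length (a # b # xs)}
      \<subseteq> insert {a,b} {{(b # xs) ! i, (b # xs) ! Suc i} | i. Suc i < length (b # xs)}"
    proof
      fix e assume "e \<in> {{(a # b # xs) ! i, (a # b # xs) ! Suc i} | i. Suc i < length (a # b # xs)}"
      then obtain i where i: "e = {(a # b # xs) ! i, (a # b # xs) ! Suc i}" "Suc i < length (a # b # xs)" by blast
      show "e \<in> insert {a,b} {{(b # xs) ! i, (b # xs) ! Suc i} | i. Suc i < length (b # xs)}"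
      proof (cases i)
        case 0 then show ?thesis using i by simp
      next
        case (Suc j)
        then have "e = {(b # xs) ! j, (b # xs) ! Suc j}" "Suc j < length (b # xs)" using i by auto
        then show ?thesis by blast
      qed
    qed
    show "insert {a,b} {{(b # xs) ! i, (b # xs) ! Suc i} | i. Suc i < length (b # xs)}
      \<subseteq> {{(a # b # xs) ! i, (a # b # xs) ! Suc i} | i. Suc i < length (a # b # xs)}"
    proof
      fix e assume "e \<in> insert {a,b} {{(b # xs) ! i, (b # xs) ! Suc i} | i. Suc i < length (b # xs)}"
      then consider "e = {a,b}" | j where "e = {(b # xs) ! j, (b # xs) ! Suc j}" "Suc j < length (b # xs)"
        by blast
      then show "e \<in> {{(a # b # xs) ! i, (a # b # xs) ! Suc i} | i. Suc i < length (a # b # xs)}"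
      proof cases
        case 1
        have "e = {(a # b # xs) ! 0, (a # b # xs) ! Suc 0}" "Suc 0 < length (a # b # xs)" using 1 by auto
        then show ?thesis by blast
      next
        case 2
        then have "e = {(a # b # xs) ! Suc j, (a # b # xs) ! Suc (Suc j)}" "Suc (Suc j) < length (a # b # xs)"
          by auto
        then show ?thesis by blast
      qed
    qed
  qed
  then show ?case using 1 by simp
qed auto

lemma cyc_edges_pairs:
  assumes ne: "cs \<noteq> []"
  shows "{cyc_edge cs j | j. j < length cs} = pairs (cs @ [hd cs])"
proof -
  let ?n = "length cs"
  let ?d = "cs @ [hd cs]"
  have n0: "?n > 0" using ne by simp
  have e: "\<And>j. j < ?n \<Longrightarrow> cyc_edge cs j = {?d ! j, ?d ! Suc j}"
  proof -
    fix j assume j: "j < ?n"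
    show "cyc_edge cs j = {?d ! j, ?d ! Suc j}"
    proof (cases "Suc j < ?n")
      case True then show ?thesis using j by (simp add: cyc_edge_def nth_append)
    next
      case False
      then have "Suc j = ?n" using j by simp
      then show ?thesis using j ne by (simp add: cyc_edge_def nth_append hd_conv_nth)
    qed
  qed
  have "{cyc_edge cs j | j. j < ?n} = {{?d ! j, ?d ! Suc j} | j. j < ?n}"
    using e by (metis (no_types, lifting))
  also have "\<dots> = {{?d ! i, ?d ! Suc i} | i. Suc i < length ?d}" by simp
  also have "\<dots> = pairs ?d" using pairs_nth[of ?d] by simp
  finally show ?thesis .
qed

definition okw :: "'a \<Rightarrow> 'a \<Rightarrow> 'a set \<Rightarrow> 'a set set \<Rightarrow> 'a list \<Rightarrow> bool" where
  "okw v u Y G q \<longleftrightarrow> q \<noteq> [] \<and> hd q = v \<and> last q = u \<and> set q \<subseteq> Y \<and> pairs q \<subseteq> G"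

lemma okw_cut:
  assumes ok: "okw v u Y G (as @ x # cs @ y # ds)" and G: "{x,y} \<in> G"
  shows "okw v u Y G (as @ x # y # ds)"
proof -
  let ?q = "as @ x # cs @ y # ds"
  have "pairs ?q = pairs (as @ [x]) \<union> pairs (x # cs @ y # ds)" by (rule pairs_append)
  moreover have "pairs (as @ x # y # ds) = pairs (as @ [x]) \<union> pairs (x # y # ds)" by (rule pairs_append)
  moreover have "pairs (x # cs @ y # ds) = pairs ((x # cs) @ [y]) \<union> pairs (y # ds)"
    using pairs_append[of "x # cs" y ds] by (simp del: pairs_append)
  ultimately have "pairs (as @ x # y # ds) \<subseteq> pairs ?q \<union> {{x,y}}" by auto
  then have "pairs (as @ x # y # ds) \<subseteq> G" using ok G unfolding okw_def by blast
  moreover have "hd (as @ x # y # ds) = hd ?q" by (cases as) auto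
  moreover have "last (as @ x # y # ds) = last ?q" by (cases ds) auto
  moreover have "set (as @ x # y # ds) \<subseteq> set ?q" by auto
  ultimately show ?thesis using ok unfolding okw_def by auto
qed

lemma okw_cut_dup:
  assumes ok: "okw v u Y G (xs @ [y] @ ys @ [y] @ zs)"
  shows "okw v u Y G (xs @ [y] @ zs)"
proof -
  let ?q = "xs @ [y] @ ys @ [y] @ zs"
  have "pairs ?q = pairs (xs @ [y]) \<union> pairs (y # ys @ y # zs)"
    using pairs_append[of xs y "ys @ y # zs"] by (simp del: pairs_append)
  moreover have "pairs (y # ys @ y # zs) = pairs ((y # ys) @ [y]) \<union> pairs (y # zs)"
    using pairs_append[of "y # ys" y zs] by (simp del: pairs_append)
  moreover have "pairs (xs @ [y] @ zs) = pairs (xs @ [y]) \<union> pairs (y # zs)"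
    using pairs_append[of xs y zs] by (simp del: pairs_append)
  ultimately have "pairs (xs @ [y] @ zs) \<subseteq> pairs ?q" by auto
  then have "pairs (xs @ [y] @ zs) \<subseteq> G" using ok unfolding okw_def by blast
  moreover have "hd (xs @ [y] @ zs) = hd ?q" by (cases xs) auto
  moreover have "last (xs @ [y] @ zs) = last ?q" by (cases zs) auto
  moreover have "set (xs @ [y] @ zs) \<subseteq> set ?q" by auto
  ultimately show ?thesis using ok unfolding okw_def by auto
qed

lemma shortest:
  assumes ok0: "okw v u Y G q0" and vu: "v \<noteq> u"
  shows "\<exists>m. distinct (v # m @ [u]) \<and> set (v # m @ [u]) \<subseteq> Y \<and> pairs (v # m @ [u]) \<subseteq> G \<and>
     (\<forall>x \<in> set (v # m @ [u]). \<forall>y \<in> set (v # m @ [u]). x \<noteq> y \<longrightarrow> {x,y} \<in> G \<longrightarrow> {x,y} \<in> pairs (v # m @ [u]))"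
proof -
  obtain q where q: "okw v u Y G q" and min: "\<And>q'. okw v u Y G q' \<Longrightarrow> length q \<le> length q'"
    using ex_has_least_nat[of "okw v u Y G" q0 length] ok0 by blast
  have dist: "distinct q"
  proof (rule ccontr)
    assume "\<not> distinct q"
    then obtain xs ys zs y where qe: "q = xs @ [y] @ ys @ [y] @ zs" using not_distinct_decomp by blast
    have "okw v u Y G (xs @ [y] @ zs)" using okw_cut_dup q qe by metis
    then have "length q \<le> length (xs @ [y] @ zs)" by (rule min)
    then show False using qe by simp
  qed
  have cut: "\<And>as x cs y ds. q = as @ x # cs @ y # ds \<Longrightarrow> {x,y} \<in> G \<Longrightarrow> cs = []"
  proof (rule ccontr)
    fix as x cs y ds assume qe: "q = as @ x # cs @ y # ds" and G: "{x,y} \<in> G" and "cs \<noteq> []"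
    have "okw v u Y G (as @ x # y # ds)" using okw_cut q qe G by metis
    then have "length q \<le> length (as @ x # y # ds)" by (rule min)
    then show False using qe \<open>cs \<noteq> []\<close> by simp
  qed
  have ind: "\<forall>x \<in> set q. \<forall>y \<in> set q. x \<noteq> y \<longrightarrow> {x,y} \<in> G \<longrightarrow> {x,y} \<in> pairs q"
  proof (intro ballI impI)
    fix x y assume x: "x \<in> set q" and y: "y \<in> set q" and xy: "x \<noteq> y" and G: "{x,y} \<in> G"
    obtain as bs where qx: "q = as @ x # bs" using split_list[OF x] by blast
    have "y \<in> set as \<or> y \<in> set bs" using y xy qx by auto
    then show "{x,y} \<in> pairs q"
    proof
      assume "y \<in> set bs"
      then obtain cs ds where bs: "bs = cs @ y # ds" using split_list by metis
      then have "cs = []" using cut[of as x cs y ds] qx G by simp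
      then have "q = as @ x # y # ds" using qx bs by simp
      then have "pairs q = pairs (as @ [x]) \<union> pairs (x # y # ds)" using pairs_append by metis
      then show ?thesis by simp
    next
      assume "y \<in> set as"
      then obtain cs ds where as: "as = cs @ y # ds" using split_list by metis
      have G': "{y,x} \<in> G" using G by (simp add: insert_commute)
      have "ds = []" using cut[of cs y ds x bs] qx as G' by simp
      then have "q = cs @ y # x # bs" using qx as by simp
      then have "pairs q = pairs (cs @ [y]) \<union> pairs (y # x # bs)" using pairs_append by metis
      then show ?thesis by (simp add: insert_commute)
    qed
  qed
  have qne: "q \<noteq> []" and hq: "hd q = v" and lq: "last q = u" and sq: "set q \<subseteq> Y" and pq: "pairs q \<subseteq> G"
    using q unfolding okw_def by auto
  obtain q1 where q1: "q = v # q1" using qne hq by (cases q) auto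
  have "q1 \<noteq> []" using q1 lq vu by auto
  then obtain m where "q1 = m @ [u]" using lq q1 by (metis append_butlast_last_id last_ConsR)
  then have "q = v # m @ [u]" using q1 by simp
  then show ?thesis using dist sq pq ind by metis
qed

lemma walk_of_rtrancl:
  assumes "(a,b) \<in> (grel S F)\<^sup>*"
  shows "\<exists>p. p \<noteq> [] \<and> hd p = a \<and> last p = b \<and> set p \<subseteq> gcls S F a \<and> pairs p \<subseteq> F"
  using assms
proof (induction rule: rtrancl_induct)
  case base
  have "[a] \<noteq> [] \<and> hd [a] = a \<and> last [a] = a \<and> set [a] \<subseteq> gcls S F a \<and> pairs [a] \<subseteq> F"
    using gcls_self[of a S F] by simp
  then show ?case by blast
next
  case (step y z)
  then obtain p where p: "p \<noteq> []" "hd p = a" "last p = y" "set p \<subseteq> gcls S F a" "pairs p \<subseteq> F" by blast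
  have "{y,z} \<in> F" using step(2) by (simp add: grel_def)
  have "z \<in> gcls S F a" using step(1,2) by (simp add: gcls_def)
  have "p @ [z] \<noteq> [] \<and> hd (p @ [z]) = a \<and> last (p @ [z]) = z \<and> set (p @ [z]) \<subseteq> gcls S F a \<and> pairs (p @ [z]) \<subseteq> F"
    using p pairs_snoc[OF p(1), of z] \<open>{y,z} \<in> F\<close> \<open>z \<in> gcls S F a\<close> by simp
  then show ?case by blast
qed

lemma cycle_lemma:
  fixes w :: "'a set \<Rightarrow> real" and F :: "'a set set"
  assumes SV: "S \<subseteq> V" and rS: "r \<in> S" and uV: "u \<in> V" and vV: "v \<in> V"
    and uS: "u \<notin> S" and vS: "v \<notin> S" and uv: "u \<noteq> v"
    and C1: "C1 \<in> gparts S F" and C2: "C2 \<in> gparts S F" and C12: "C1 \<noteq> C2"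
    and d1: "distinct (v # m1 @ [u])" and s1: "set m1 \<subseteq> C1" and p1: "pairs (v # m1 @ [u]) \<subseteq> F - {{u,v}}"
    and i1: "\<forall>x\<in>set (v # m1 @ [u]). \<forall>y\<in>set (v # m1 @ [u]). x \<noteq> y \<longrightarrow> {x,y} \<in> F - {{u,v}} \<longrightarrow> {x,y} \<in> pairs (v # m1 @ [u])"
    and d2: "distinct (v # m2 @ [u])" and s2: "set m2 \<subseteq> C2" and p2: "pairs (v # m2 @ [u]) \<subseteq> F - {{u,v}}"
    and i2: "\<forall>x\<in>set (v # m2 @ [u]). \<forall>y\<in>set (v # m2 @ [u]). x \<noteq> y \<longrightarrow> {x,y} \<in> F - {{u,v}} \<longrightarrow> {x,y} \<in> pairs (v # m2 @ [u])"
    and tri: "{u,v} \<in> F \<Longrightarrow> \<exists>s. m1 = [s] \<and> w {v,s} \<le> w {u,v} \<and> w {s,u} \<le> w {u,v}"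
  shows "\<exists>cs. violated_cycle w V F r cs"
proof -
  let ?q1 = "v # m1 @ [u]" and ?q2 = "v # m2 @ [u]"
  let ?cs = "v # m1 @ u # rev m2"
  have C1S: "C1 \<subseteq> S" using gparts_sub[OF C1] .
  have C2S: "C2 \<subseteq> S" using gparts_sub[OF C2] .
  have disjC: "\<And>z. z \<in> C1 \<Longrightarrow> z \<in> C2 \<Longrightarrow> False"
  proof -
    fix z assume "z \<in> C1" "z \<in> C2"
    then have "gcls S F z = C1" "gcls S F z = C2" using gparts_cls C1 C2 by metis+
    then show False using C12 by simp
  qed
  have sep: "\<And>x y. x \<in> C1 \<Longrightarrow> y \<in> C2 \<Longrightarrow> {x,y} \<notin> F"
  proof
    fix x y assume x: "x \<in> C1" and y: "y \<in> C2" and e: "{x,y} \<in> F"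
    have "y \<in> gcls S F x" using gcls_edge[of x S y F] x y e C1S C2S by blast
    then have "y \<in> C1" using gparts_cls[OF C1 x] by simp
    then show False using disjC y by blast
  qed
  have uvne: "{v,u} = {u,v}" by (simp add: insert_commute)
  have m1ne: "m1 \<noteq> []"
  proof
    assume "m1 = []"
    then have "{v,u} \<in> pairs ?q1" by simp
    then show False using p1 uvne by auto
  qed
  have m2ne: "m2 \<noteq> []"
  proof
    assume "m2 = []"
    then have "{v,u} \<in> pairs ?q2" by simp
    then show False using p2 uvne by auto
  qed
  have dis12: "set m1 \<inter> set m2 = {}" using s1 s2 disjC by blast
  have dcs: "distinct ?cs" using d1 d2 dis12 uv by auto
  have lcs: "length ?cs \<ge> 4" using m1ne m2ne by (cases m1; cases m2) auto
  have pcs: "pairs (?cs @ [hd ?cs]) = pairs ?q1 \<union> pairs ?q2"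
  proof -
    have "?cs @ [hd ?cs] = (v # m1) @ u # (rev m2 @ [v])" by simp
    then have "pairs (?cs @ [hd ?cs]) = pairs ((v # m1) @ [u]) \<union> pairs (u # rev m2 @ [v])"
      using pairs_append[of "v # m1" u "rev m2 @ [v]"] by (simp del: pairs_append)
    moreover have "pairs (u # rev m2 @ [v]) = pairs ?q2" using pairs_rev[of ?q2] by simp
    ultimately show ?thesis by simp
  qed
  have CE: "{cyc_edge ?cs j | j. j < length ?cs} = pairs ?q1 \<union> pairs ?q2"
    using cyc_edges_pairs[of ?cs] pcs by simp
  have setcs: "set ?cs = set ?q1 \<union> set ?q2" by auto
  have cyc: "is_cycle V F ?cs"
    unfolding is_cycle_def
  proof (intro conjI allI impI)
    show "distinct ?cs" by (rule dcs)
    show "3 \<le> length ?cs" using lcs by simp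
    show "set ?cs \<subseteq> V" using s1 s2 C1S C2S SV uV vV by auto
    fix j assume "j < length ?cs"
    then have "cyc_edge ?cs j \<in> pairs ?q1 \<union> pairs ?q2" using CE by blast
    then show "cyc_edge ?cs j \<in> F" using p1 p2 by blast
  qed
  have chord: "\<And>x y. x \<in> set ?cs \<Longrightarrow> y \<in> set ?cs \<Longrightarrow> x \<noteq> y \<Longrightarrow> {x,y} \<in> F \<Longrightarrow>
      {x,y} \<notin> pairs ?q1 \<union> pairs ?q2 \<Longrightarrow> {x,y} = {u,v}"
  proof (rule ccontr)
    fix x y assume x: "x \<in> set ?cs" and y: "y \<in> set ?cs" and xy: "x \<noteq> y" and e: "{x,y} \<in> F"
      and np: "{x,y} \<notin> pairs ?q1 \<union> pairs ?q2" and nuv: "{x,y} \<noteq> {u,v}"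
    have G: "{x,y} \<in> F - {{u,v}}" using e nuv by simp
    have n1: "\<not> (x \<in> set ?q1 \<and> y \<in> set ?q1)"
    proof
      assume "x \<in> set ?q1 \<and> y \<in> set ?q1"
      then have "{x,y} \<in> pairs ?q1" using i1 xy G by blast
      then show False using np by simp
    qed
    have n2: "\<not> (x \<in> set ?q2 \<and> y \<in> set ?q2)"
    proof
      assume "x \<in> set ?q2 \<and> y \<in> set ?q2"
      then have "{x,y} \<in> pairs ?q2" using i2 xy G by blast
      then show False using np by simp
    qed
    have "(x \<in> set m1 \<and> y \<in> set m2) \<or> (x \<in> set m2 \<and> y \<in> set m1)"
      using x y n1 n2 by auto
    then show False
    proof
      assume "x \<in> set m1 \<and> y \<in> set m2"
      then show False using sep[of x y] s1 s2 e by blast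
    next
      assume "x \<in> set m2 \<and> y \<in> set m1"
      then have "{y,x} \<notin> F" using sep[of y x] s1 s2 by blast
      then show False using e by (simp add: insert_commute)
    qed
  qed
  have wc: "well_covered w F ?cs"
    unfolding well_covered_def
  proof (intro allI impI)
    fix a b assume ch: "is_chord F ?cs a b"
    then have ab: "a < b" "b < length ?cs" "{?cs ! a, ?cs ! b} \<in> F"
      "{?cs ! a, ?cs ! b} \<notin> {cyc_edge ?cs j | j. j < length ?cs}"
      unfolding is_chord_def by auto
    have ne: "?cs ! a \<noteq> ?cs ! b" using dcs ab(1,2) nth_eq_iff_index_eq[OF dcs, of a b] by simp
    have np: "{?cs ! a, ?cs ! b} \<notin> pairs ?q1 \<union> pairs ?q2" using ab(4) unfolding CE .
    have al: "a < length ?cs" using ab(1,2) by linarith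
    have eq: "{?cs ! a, ?cs ! b} = {u,v}"
      using chord[OF nth_mem[OF al] nth_mem[OF ab(2)] ne ab(3) np] .
    then have "{u,v} \<in> F" using ab(3) by simp
    then obtain s where s: "m1 = [s]" "w {v,s} \<le> w {u,v}" "w {s,u} \<le> w {u,v}" using tri by blast
    have c0: "?cs ! 0 = v" by simp
    have c2: "?cs ! 2 = u" using s by simp
    have c1: "?cs ! 1 = s" using s by simp
    have a0: "\<And>k. k < length ?cs \<Longrightarrow> ?cs ! k = v \<Longrightarrow> k = 0"
      using nth_eq_iff_index_eq[OF dcs] c0 lcs by (metis less_le_trans zero_less_numeral)
    have a2: "\<And>k. k < length ?cs \<Longrightarrow> ?cs ! k = u \<Longrightarrow> k = 2"
    proof -
      fix k assume "k < length ?cs" "?cs ! k = u"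
      moreover have "2 < length ?cs" using lcs by linarith
      ultimately show "k = 2" using nth_eq_iff_index_eq[OF dcs, of k 2] c2 by simp
    qed
    have "?cs ! a \<in> {?cs ! a, ?cs ! b}" "?cs ! b \<in> {?cs ! a, ?cs ! b}" by simp_all
    then have ha: "?cs ! a = u \<or> ?cs ! a = v" and hb: "?cs ! b = u \<or> ?cs ! b = v"
      unfolding eq by simp_all
    have "a = 2 \<or> a = 0" using ha a0[OF al] a2[OF al] by blast
    moreover have "b = 2 \<or> b = 0" using hb a0[OF ab(2)] a2[OF ab(2)] by blast
    ultimately have ab02: "a = 0" "b = 2" using ab(1) by auto
    have "\<forall>j \<in> {a..<b}. w (cyc_edge ?cs j) \<le> w {?cs ! a, ?cs ! b}"
    proof
      fix j assume "j \<in> {a..<b}"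
      then have "j = 0 \<or> j = 1" using ab02 by auto
      moreover have "cyc_edge ?cs 0 = {v,s}" using s lcs c1 by (simp add: cyc_edge_def)
      moreover have "cyc_edge ?cs 1 = {s,u}" using s lcs c1 c2 by (simp add: cyc_edge_def)
      moreover have "w {?cs ! a, ?cs ! b} = w {u,v}" using ab02 c0 c2 uvne by simp
      ultimately show "w (cyc_edge ?cs j) \<le> w {?cs ! a, ?cs ! b}" using s by auto
    qed
    then show "covers w ?cs a b" unfolding covers_def by blast
  qed
  obtain x1 where x1: "x1 \<in> set m1" using m1ne by (cases m1) auto
  obtain x2 where x2: "x2 \<in> set m2" using m2ne by (cases m2) auto
  have x1C: "x1 \<in> C1" using x1 s1 by blast
  have x2C: "x2 \<in> C2" using x2 s2 by blast
  have nonadj: "\<exists>x\<in>set ?cs. \<exists>y\<in>set ?cs. x \<noteq> y \<and> {x, y} \<notin> F"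
  proof -
    have "x1 \<noteq> x2" using x1C x2C disjC by blast
    moreover have "{x1,x2} \<notin> F" using sep[OF x1C x2C] .
    ultimately show ?thesis using x1 x2 by auto
  qed
  have rx: "\<exists>x\<in>set ?cs. x \<noteq> r \<and> {r, x} \<notin> F"
  proof (cases "r \<in> C2")
    case True
    have "x1 \<noteq> r" using x1C True disjC by blast
    moreover have "{r,x1} \<notin> F" using sep[OF x1C True] by (simp add: insert_commute)
    ultimately show ?thesis using x1 by auto
  next
    case False
    have "x2 \<noteq> r" using x2C False by blast
    moreover have "{r,x2} \<notin> F"
    proof
      assume "{r,x2} \<in> F"
      then have "x2 \<in> gcls S F r" using gcls_edge[of r S x2 F] rS x2C C2S by blast
      then have "r \<in> gcls S F x2" by (rule gcls_mem_sym)
      then have "r \<in> C2" using gparts_cls[OF C2 x2C] by simp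
      then show False using False by simp
    qed
    ultimately show ?thesis using x2 by auto
  qed
  have "violated_cycle w V F r ?cs"
    unfolding violated_cycle_def using cyc wc nonadj rx by blast
  then show ?thesis by blast
qed

lemma mst_formula:
  fixes w :: "'a set \<Rightarrow> real"
  assumes finV: "finite V" and XV: "X \<subseteq> V" and ne: "X \<noteq> {}" and EV: "all_edges V \<noteq> {}"
  shows "mst w X = Min (w ` all_edges V) * (real (card X) - 1) +
    (\<Sum>t \<in> w ` all_edges V. gap (w ` all_edges V) t * (real (gcc X (thr_edges w V t)) - 1))"
proof -
  let ?W = "w ` all_edges V"
  let ?Phi = "Min ?W * (real (card X) - 1) + (\<Sum>t \<in> ?W. gap ?W t * (real (gcc X (thr_edges w V t)) - 1))"
  have finW: "finite ?W" using finite_all_edges[OF finV] by simp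
  have finX: "finite X" using finV XV finite_subset by blast
  have cX: "card X \<ge> 1" using finX ne by (simp add: Suc_le_eq card_gt_0_iff)
  have basic: "\<And>T. spanning_tree X T \<Longrightarrow> sum w T = Min ?W * (real (card X) - 1) +
      (\<Sum>t \<in> ?W. gap ?W t * real (card {e \<in> T. t < w e}))"
  proof -
    fix T assume T: "spanning_tree X T"
    have TX: "T \<subseteq> all_edges X" and cT: "card T = card X - 1" using T by (auto simp: spanning_tree_def)
    have finT: "finite T" using finite_subset[OF TX finite_all_edges[OF finX]] .
    have TW: "\<And>e. e \<in> T \<Longrightarrow> w e \<in> ?W" using TX all_edges_mono[OF XV] by blast
    have "real (card T) = real (card X) - 1" using cT cX by simp
    then show "sum w T = Min ?W * (real (card X) - 1) + (\<Sum>t \<in> ?W. gap ?W t * real (card {e \<in> T. t < w e}))"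
      using sum_tele[OF finW finT TW] by simp
  qed
  have low: "\<And>T. spanning_tree X T \<Longrightarrow> ?Phi \<le> sum w T"
  proof -
    fix T assume T: "spanning_tree X T"
    have "\<And>t. t \<in> ?W \<Longrightarrow> gap ?W t * (real (gcc X (thr_edges w V t)) - 1) \<le> gap ?W t * real (card {e \<in> T. t < w e})"
    proof -
      fix t assume "t \<in> ?W"
      have "gcc X (thr_edges w V t) \<le> card {e \<in> T. t < w e} + 1" using tree_lower[OF finX ne XV T] .
      then have "real (gcc X (thr_edges w V t)) - 1 \<le> real (card {e \<in> T. t < w e})" by linarith
      then show "gap ?W t * (real (gcc X (thr_edges w V t)) - 1) \<le> gap ?W t * real (card {e \<in> T. t < w e})"
        using gap_nonneg[OF finW, of t] by (rule mult_left_mono)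
    qed
    then have "(\<Sum>t \<in> ?W. gap ?W t * (real (gcc X (thr_edges w V t)) - 1)) \<le> (\<Sum>t \<in> ?W. gap ?W t * real (card {e \<in> T. t < w e}))"
      by (rule sum_mono)
    then show "?Phi \<le> sum w T" using basic[OF T] by simp
  qed
  obtain K where K: "spanning_tree X K" "\<forall>t \<in> ?W. card {e \<in> K. t < w e} + 1 \<le> gcc X (thr_edges w V t)"
    using kruskal[OF finV XV ne EV, of w] by blast
  have eqK: "sum w K = ?Phi"
  proof -
    have "\<And>t. t \<in> ?W \<Longrightarrow> gap ?W t * real (card {e \<in> K. t < w e}) = gap ?W t * (real (gcc X (thr_edges w V t)) - 1)"
    proof -
      fix t assume t: "t \<in> ?W"
      have "gcc X (thr_edges w V t) \<le> card {e \<in> K. t < w e} + 1" using tree_lower[OF finX ne XV K(1)] .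
      moreover have "card {e \<in> K. t < w e} + 1 \<le> gcc X (thr_edges w V t)" using K(2) t by blast
      ultimately have "real (card {e \<in> K. t < w e}) = real (gcc X (thr_edges w V t)) - 1" by linarith
      then show "gap ?W t * real (card {e \<in> K. t < w e}) = gap ?W t * (real (gcc X (thr_edges w V t)) - 1)" by simp
    qed
    then have "(\<Sum>t \<in> ?W. gap ?W t * real (card {e \<in> K. t < w e})) = (\<Sum>t \<in> ?W. gap ?W t * (real (gcc X (thr_edges w V t)) - 1))"
      by (rule sum.cong[OF refl])
    then show ?thesis using basic[OF K(1)] by simp
  qed
  have fin: "finite {sum w T | T. spanning_tree X T}"
  proof -
    have "{sum w T | T. spanning_tree X T} \<subseteq> sum w ` Pow (all_edges X)"
      by (auto simp: spanning_tree_def)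
    then show ?thesis using finite_all_edges[OF finX] finite_subset by blast
  qed
  have "Min {sum w T | T. spanning_tree X T} = ?Phi"
  proof (rule Min_eqI[OF fin])
    fix y assume "y \<in> {sum w T | T. spanning_tree X T}"
    then obtain T where "y = sum w T" "spanning_tree X T" by blast
    then show "?Phi \<le> y" using low by simp
  next
    show "?Phi \<in> {sum w T | T. spanning_tree X T}" using eqK K(1) by (metis (mono_tags, lifting) mem_Collect_eq)
  qed
  then show ?thesis by (simp add: mst_def)
qed

lemma class_path:
  fixes F :: "'a set set"
  assumes uS: "u \<notin> S" and vS: "v \<notin> S" and uv: "u \<noteq> v"
    and C: "C \<in> gparts S F" and a: "a \<in> C" "{u,a} \<in> F" and b: "b \<in> C" "{v,b} \<in> F"
  shows "\<exists>m. distinct (v # m @ [u]) \<and> set m \<subseteq> C \<and> pairs (v # m @ [u]) \<subseteq> F - {{u,v}} \<and>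
    (\<forall>x\<in>set (v # m @ [u]). \<forall>y\<in>set (v # m @ [u]). x \<noteq> y \<longrightarrow> {x,y} \<in> F - {{u,v}} \<longrightarrow> {x,y} \<in> pairs (v # m @ [u]))"
proof -
  have CS: "C \<subseteq> S" using gparts_sub[OF C] .
  have cb: "gcls S F b = C" using gparts_cls[OF C b(1)] .
  then have "a \<in> gcls S F b" using a(1) by simp
  then have "(b,a) \<in> (grel S F)\<^sup>*" by (simp add: gcls_def)
  then obtain p where p: "p \<noteq> []" "hd p = b" "last p = a" "set p \<subseteq> gcls S F b" "pairs p \<subseteq> F"
    using walk_of_rtrancl by metis
  have pC: "set p \<subseteq> C" using p(4) cb by simp
  let ?G = "F - {{u,v}}"
  let ?Y = "insert v (insert u C)"
  have pG: "pairs p \<subseteq> ?G"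
  proof
    fix e assume e: "e \<in> pairs p"
    then obtain x y where xy: "e = {x,y}" "x \<in> set p" "y \<in> set p" using pairs_mem by metis
    have "x \<in> S" using xy(2) pC CS by blast
    then have "e \<noteq> {u,v}" using xy(1) uS vS by (auto simp: doubleton_eq_iff)
    then show "e \<in> ?G" using e p(5) by blast
  qed
  have bS: "b \<in> S" and aS: "a \<in> S" using a b CS by auto
  have e1: "{v,b} \<in> ?G" using b(2) bS vS uS by (auto simp: doubleton_eq_iff)
  have e2: "{a,u} \<in> ?G" using a(2) aS vS uS by (auto simp: doubleton_eq_iff insert_commute)
  have "pairs (v # p @ [u]) = insert {v,b} (insert {a,u} (pairs p))"
    using pairs_Cons[of "p @ [u]" v] pairs_snoc[OF p(1), of u] p(1,2,3) by simp
  then have "pairs (v # p @ [u]) \<subseteq> ?G" using e1 e2 pG by simp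
  then have ok: "okw v u ?Y ?G (v # p @ [u])" using pC unfolding okw_def by auto
  obtain m where m: "distinct (v # m @ [u])" "set (v # m @ [u]) \<subseteq> ?Y" "pairs (v # m @ [u]) \<subseteq> ?G"
    "\<forall>x\<in>set (v # m @ [u]). \<forall>y\<in>set (v # m @ [u]). x \<noteq> y \<longrightarrow> {x,y} \<in> ?G \<longrightarrow> {x,y} \<in> pairs (v # m @ [u])"
    using shortest[OF ok uv[symmetric]] by blast
  have "set m \<subseteq> C" using m(1,2) by auto
  then show ?thesis using m by blast
qed

lemma aux_arith:
  fixes x y z q g :: real
  assumes h: "x + y = z + q"
  shows "g * (x - 1) + g * (y - 1) - g * (z - 1) - g * (q - 1) = 0"
proof -
  have "g * (x - 1) + g * (y - 1) - g * (z - 1) - g * (q - 1) = g * ((x + y) - (z + q))"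
    by (simp add: algebra_simps)
  then show ?thesis using h by simp
qed

theorem lemma5:
  fixes N :: "'a set" and r u v :: 'a and w :: "'a set \<Rightarrow> real" and S :: "'a set"
  assumes "finite N" and "r \<notin> N"
    and no_viol: "\<forall>c \<in> w ` all_edges (insert r N). c < Max (w ` all_edges (insert r N)) \<longrightarrow>
        (\<nexists>cs. violated_cycle w (insert r N) (thr_edges w (insert r N) c) r cs)"
    and "u \<in> N" and "v \<in> N" and "u \<noteq> v"
    and "S \<in> S_fam (insert r N) r u v"
    and "\<not> S \<subseteq> exp_nbhd w (insert r N) u v"
  shows "f_uv w u v S = 0"
proof -
  let ?V = "insert r N"
  let ?W = "w ` all_edges ?V"
  have finV: "finite ?V" using assms(1) by simp
  have uV: "u \<in> ?V" and vV: "v \<in> ?V" using assms(4,5) by auto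
  have uv: "u \<noteq> v" by fact
  have SV: "S \<subseteq> ?V" and rS: "r \<in> S" and uS: "u \<notin> S" and vS: "v \<notin> S"
    using assms(7) by (auto simp: S_fam_def)
  have finS: "finite S" using finV SV finite_subset by blast
  have EV: "all_edges ?V \<noteq> {}" using all_edges_memI[OF uV vV uv] by blast
  have finW: "finite ?W" using finite_all_edges[OF finV] by simp
  obtain s where sS: "s \<in> S" and sN: "s \<notin> exp_nbhd w ?V u v" using assms(8) by blast
  have su: "s \<noteq> u" "s \<noteq> v" using sS uS vS by auto
  have sV: "s \<in> ?V" using sS SV by blast
  have ws: "w {s,u} \<le> w {u,v}" "w {s,v} \<le> w {u,v}" using sN sV su unfolding exp_nbhd_def by auto
  have br: "\<And>t. t \<in> ?W \<Longrightarrow> t < Max ?W \<Longrightarrow>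
    gcc (insert u S) (thr_edges w ?V t) + gcc (insert v S) (thr_edges w ?V t) =
    gcc S (thr_edges w ?V t) + gcc (insert u (insert v S)) (thr_edges w ?V t)"
  proof -
    fix t assume tW: "t \<in> ?W" and tM: "t < Max ?W"
    let ?F = "thr_edges w ?V t"
    let ?Ku = "touch S ?F u" and ?Kv = "touch S ?F v"
    have nv: "\<nexists>cs. violated_cycle w ?V ?F r cs" using no_viol tW tM by blast
    have fK: "finite (?Ku \<inter> ?Kv)" using finite_gparts[OF finS, of ?F] by (auto simp: touch_def)
    let ?Cs = "gcls S ?F s"
    have CsP: "?Cs \<in> gparts S ?F" using sS by (simp add: gparts_def)
    have Bs: "{u,v} \<in> ?F \<Longrightarrow> {u,s} \<in> ?F \<and> {v,s} \<in> ?F"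
    proof -
      assume "{u,v} \<in> ?F"
      then have wt: "w {u,v} \<le> t" by (simp add: thr_edges_def)
      have "{s,u} \<in> all_edges ?V" "{s,v} \<in> all_edges ?V" using all_edges_memI sV uV vV su by metis+
      then have "{s,u} \<in> ?F" "{s,v} \<in> ?F" using ws wt by (auto simp: thr_edges_def)
      then show "{u,s} \<in> ?F \<and> {v,s} \<in> ?F" by (simp add: insert_commute)
    qed
    have B: "{u,v} \<in> ?F \<Longrightarrow> ?Cs \<in> ?Ku \<inter> ?Kv"
      using Bs CsP gcls_self[of s S ?F] unfolding touch_def by blast
    have A: "\<And>C1 C2. C1 \<in> ?Ku \<inter> ?Kv \<Longrightarrow> C2 \<in> ?Ku \<inter> ?Kv \<Longrightarrow> C1 = C2"
    proof (rule ccontr)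
      fix C1 C2 assume C1: "C1 \<in> ?Ku \<inter> ?Kv" and C2: "C2 \<in> ?Ku \<inter> ?Kv" and ne: "C1 \<noteq> C2"
      have path: "\<And>C. C \<in> ?Ku \<inter> ?Kv \<Longrightarrow> \<exists>m. distinct (v # m @ [u]) \<and> set m \<subseteq> C \<and> pairs (v # m @ [u]) \<subseteq> ?F - {{u,v}} \<and>
        (\<forall>x\<in>set (v # m @ [u]). \<forall>y\<in>set (v # m @ [u]). x \<noteq> y \<longrightarrow> {x,y} \<in> ?F - {{u,v}} \<longrightarrow> {x,y} \<in> pairs (v # m @ [u]))"
      proof -
        fix C assume "C \<in> ?Ku \<inter> ?Kv"
        then obtain a b where C: "C \<in> gparts S ?F" "a \<in> C" "{u,a} \<in> ?F" "b \<in> C" "{v,b} \<in> ?F"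
          unfolding touch_def by blast
        show "\<exists>m. distinct (v # m @ [u]) \<and> set m \<subseteq> C \<and> pairs (v # m @ [u]) \<subseteq> ?F - {{u,v}} \<and>
        (\<forall>x\<in>set (v # m @ [u]). \<forall>y\<in>set (v # m @ [u]). x \<noteq> y \<longrightarrow> {x,y} \<in> ?F - {{u,v}} \<longrightarrow> {x,y} \<in> pairs (v # m @ [u]))"
          using class_path[OF uS vS uv C] .
      qed
      have C1P: "C1 \<in> gparts S ?F" and C2P: "C2 \<in> gparts S ?F" using C1 C2 by (auto simp: touch_def)
      show False
      proof (cases "{u,v} \<in> ?F")
        case True
        obtain C where C: "C \<in> ?Ku \<inter> ?Kv" "C \<noteq> ?Cs" using C1 C2 ne by blast
        have CP: "C \<in> gparts S ?F" using C(1) by (auto simp: touch_def)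
        obtain m2 where m2: "distinct (v # m2 @ [u])" "set m2 \<subseteq> C" "pairs (v # m2 @ [u]) \<subseteq> ?F - {{u,v}}"
          "\<forall>x\<in>set (v # m2 @ [u]). \<forall>y\<in>set (v # m2 @ [u]). x \<noteq> y \<longrightarrow> {x,y} \<in> ?F - {{u,v}} \<longrightarrow> {x,y} \<in> pairs (v # m2 @ [u])"
          using path[OF C(1)] by blast
        have es: "{u,s} \<in> ?F" "{v,s} \<in> ?F" using Bs True by auto
        have nuv1: "{v,s} \<noteq> {u,v}" "{s,u} \<noteq> {u,v}" using su by (auto simp: doubleton_eq_iff)
        have d1: "distinct (v # [s] @ [u])" using su uv by auto
        have s1: "set [s] \<subseteq> ?Cs" using gcls_self[of s S ?F] by simp
        have p1: "pairs (v # [s] @ [u]) \<subseteq> ?F - {{u,v}}"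
          using es nuv1 by (simp add: insert_commute)
        have i1: "\<forall>x\<in>set (v # [s] @ [u]). \<forall>y\<in>set (v # [s] @ [u]). x \<noteq> y \<longrightarrow> {x,y} \<in> ?F - {{u,v}} \<longrightarrow> {x,y} \<in> pairs (v # [s] @ [u])"
          by (auto simp: insert_commute)
        have tri: "{u,v} \<in> ?F \<Longrightarrow> \<exists>s'. [s] = [s'] \<and> w {v,s'} \<le> w {u,v} \<and> w {s',u} \<le> w {u,v}"
          using ws by (simp add: insert_commute)
        have "\<exists>cs. violated_cycle w ?V ?F r cs"
          using cycle_lemma[OF SV rS uV vV uS vS uv CsP CP C(2)[symmetric] d1 s1 p1 i1 m2 tri] .
        then show False using nv by blast
      next
        case False
        obtain m1 where m1: "distinct (v # m1 @ [u])" "set m1 \<subseteq> C1" "pairs (v # m1 @ [u]) \<subseteq> ?F - {{u,v}}"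
          "\<forall>x\<in>set (v # m1 @ [u]). \<forall>y\<in>set (v # m1 @ [u]). x \<noteq> y \<longrightarrow> {x,y} \<in> ?F - {{u,v}} \<longrightarrow> {x,y} \<in> pairs (v # m1 @ [u])"
          using path[OF C1] by blast
        obtain m2 where m2: "distinct (v # m2 @ [u])" "set m2 \<subseteq> C2" "pairs (v # m2 @ [u]) \<subseteq> ?F - {{u,v}}"
          "\<forall>x\<in>set (v # m2 @ [u]). \<forall>y\<in>set (v # m2 @ [u]). x \<noteq> y \<longrightarrow> {x,y} \<in> ?F - {{u,v}} \<longrightarrow> {x,y} \<in> pairs (v # m2 @ [u])"
          using path[OF C2] by blast
        have tri: "{u,v} \<in> ?F \<Longrightarrow> \<exists>s'. m1 = [s'] \<and> w {v,s'} \<le> w {u,v} \<and> w {s',u} \<le> w {u,v}"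
          using False by simp
        have "\<exists>cs. violated_cycle w ?V ?F r cs"
          using cycle_lemma[OF SV rS uV vV uS vS uv C1P C2P ne m1 m2 tri] .
        then show False using nv by blast
      qed
    qed
    have le1: "card (?Ku \<inter> ?Kv) \<le> Suc 0" using card_le_Suc0_iff_eq[OF fK] A by blast
    have hyp: "card (?Ku \<inter> ?Kv) = (if {u,v} \<in> ?F \<or> ?Ku \<inter> ?Kv \<noteq> {} then 1 else 0)"
    proof (cases "?Ku \<inter> ?Kv = {}")
      case True
      then have "{u,v} \<notin> ?F" using B by blast
      then show ?thesis using True by simp
    next
      case False
      then have "card (?Ku \<inter> ?Kv) \<ge> 1" using fK by (simp add: Suc_le_eq card_gt_0_iff)
      then show ?thesis using le1 False by simp
    qed
    show "gcc (insert u S) ?F + gcc (insert v S) ?F = gcc S ?F + gcc (insert u (insert v S)) ?F"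
      using bracket[OF finS uS vS uv hyp] .
  qed
  let ?g = "\<lambda>X t. real (gcc X (thr_edges w ?V t)) - 1"
  have form: "\<And>X. X \<subseteq> ?V \<Longrightarrow> X \<noteq> {} \<Longrightarrow> mst w X = Min ?W * (real (card X) - 1) + (\<Sum>t \<in> ?W. gap ?W t * ?g X t)"
    using mst_formula[OF finV _ _ EV] by blast
  have Su: "insert u S \<subseteq> ?V" "insert v S \<subseteq> ?V" "insert u (insert v S) \<subseteq> ?V" using SV uV vV by auto
  have cards: "card (insert u S) = card S + 1" "card (insert v S) = card S + 1"
    "card (insert u (insert v S)) = card S + 2" using finS uS vS uv by auto
  have zero: "\<And>t. t \<in> ?W \<Longrightarrow> gap ?W t * ?g (insert u S) t + gap ?W t * ?g (insert v S) t
      - gap ?W t * ?g S t - gap ?W t * ?g (insert u (insert v S)) t = 0"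
  proof -
    fix t assume tW: "t \<in> ?W"
    show "gap ?W t * ?g (insert u S) t + gap ?W t * ?g (insert v S) t
      - gap ?W t * ?g S t - gap ?W t * ?g (insert u (insert v S)) t = 0"
    proof (cases "t < Max ?W")
      case True
      have "real (gcc (insert u S) (thr_edges w ?V t)) + real (gcc (insert v S) (thr_edges w ?V t)) =
        real (gcc S (thr_edges w ?V t)) + real (gcc (insert u (insert v S)) (thr_edges w ?V t))"
        using br[OF tW True] by (metis of_nat_add)
      then show ?thesis by (rule aux_arith)
    next
      case False
      have "t \<le> Max ?W" using Max_ge[OF finW tW] .
      then have "{t' \<in> ?W. t < t'} = {}" using False Max_ge[OF finW] by fastforce
      then have "gap ?W t = 0" by (simp add: gap_def)
      then show ?thesis by simp
    qed
  qed
  have sumz: "(\<Sum>t \<in> ?W. gap ?W t * ?g (insert u S) t) + (\<Sum>t \<in> ?W. gap ?W t * ?g (insert v S) t)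
      - (\<Sum>t \<in> ?W. gap ?W t * ?g S t) - (\<Sum>t \<in> ?W. gap ?W t * ?g (insert u (insert v S)) t) = 0"
  proof -
    have "(\<Sum>t \<in> ?W. gap ?W t * ?g (insert u S) t) + (\<Sum>t \<in> ?W. gap ?W t * ?g (insert v S) t)
      - (\<Sum>t \<in> ?W. gap ?W t * ?g S t) - (\<Sum>t \<in> ?W. gap ?W t * ?g (insert u (insert v S)) t)
      = (\<Sum>t \<in> ?W. gap ?W t * ?g (insert u S) t + gap ?W t * ?g (insert v S) t
      - gap ?W t * ?g S t - gap ?W t * ?g (insert u (insert v S)) t)"
      by (simp add: sum.distrib sum_subtractf)
    also have "\<dots> = 0" using zero by (intro sum.neutral) blast
    finally show ?thesis .
  qed
  have ne: "S \<noteq> {}" using rS by blast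
  show ?thesis
    unfolding f_uv_def
    using form[OF Su(1)] form[OF Su(2)] form[OF SV ne] form[OF Su(3)] cards sumz
    by (simp add: algebra_simps)
qed

end
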